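(* Consider the setting described in the context, with fixed data $\mathcal{G}$, $\mathcal{I}_u$, $\mathcal{I}_\omega$ and fixed parameters $T,\tilde t, N, c_i, d, \epsilon_i, T_i, \underline\omega_i,\bar\omega_i$. For every $\hat P=[\hat p(0),\dots,\hat p(N-1)]\in\mathbb{R}^{n\times N}$, $f_0\in\mathbb{R}^m$, $\omega_0\in\mathbb{R}^n$ and $a_0\in\mathbb{A}$, the optimization problem $\mathbf{R}(\hat P,f_0,\omega_0,a_0)$ has a unique optimal solution $(\hat F^*,\hat\Omega^*,\hat A^*,\hat u^*,\beta^* )$. Moreover, $\hat u^*$ is a continuous and piece-wise affine function of $z$, where $z$ is the column vector stacking $(\hat P, f_0,\omega_0,a_0)$: there exist $l\in\mathbb{N}$ and matrices/vectors $\{H_i\}_{i=1}^l,\{S_i\}_{i=1}^l,\{h_i\}_{i=1}^l,\{s_i\}_{i=1}^l$ of suitable dimensions such that for every admissible $z$, $\hat u^* = S_i z+s_i$ whenever $H_i z\leqslant h_i$, $i\in\{1,\dots,l\}$ (and the sets $\{y: H_i y\leqslant h_i\}$ cover all admissible $z$).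
   Context: Let $\mathcal{G}=(\mathcal{I},\mathcal{E})$ be a connected undirected graph with $\mathcal{I}=\{1,\dots,n\}$ and $\mathcal{E}=\{e_1,\dots,e_m\}$, with a fixed arbitrary orientation and incidence matrix $D\in\mathbb{R}^{m\times n}$ ($D_{ki}=1$ if $i$ is the positive end of $e_k$, $-1$ if the negative end, $0$ otherwise). Let $M=\mathrm{diag}(M_1,\dots,M_n)$ and $E=\mathrm{diag}(E_1,\dots,E_n)$ with all $M_i,E_i>0$, and let $Y_b\in\mathbb{R}^{m\times m}$ be diagonal with positive diagonal entries. Let $\mathcal{I}_\omega\subseteq\mathcal{I}_u\subseteq\mathcal{I}$ and $\mathbb{A}=\{y\in\mathbb{R}^n: y_w=0 \text{ for all } w\in\mathcal{I}\setminus\mathcal{I}_u\}$. Parameters: $T>0$, $\tilde t>0$, $N=\lceil \tilde t/T\rceil$, $c_i>0$, $\epsilon_i>0$, $T_i>0$ for $i\in\mathcal{I}_u$, $d>0$, and $\underline\omega_i<\bar\omega_i$ for $i\in\mathcal{I}_\omega$. The problem $\mathbf{R}(\hat P,f_0,\omega_0,a_0)$ has decision variables $\hat f(k)\in\mathbb{R}^m$, $\hat\omega(k)\in\mathbb{R}^n$, $\hat\alpha(k)\in\mathbb{R}^n$ ($k=0,\dots,N$), $\hat u\in\mathbb{R}^n$, $\beta\in\mathbb{R}$ (with $\hat F=[\hat f(0),\dots,\hat f(N)]$, $\hat\Omega$, $\hat A$ defined analogously), and reads: minimize $\sum_{i\in\mathcal{I}_u} c_i\hat u_i^2 + d\beta^2$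 subject to, for all $k\in\{0,\dots,N-1\}$: $\hat f(k+1)=\hat f(k)+TY_bD\hat\omega(k)$; $M\hat\omega(k+1)=M\hat\omega(k)+T(-E\hat\omega(k)-D^T\hat f(k)+\hat p(k)+\hat u)$; $\hat\alpha_i(k+1)=\hat\alpha_i(k)+T(-\hat\alpha_i(k)/T_i-\hat\omega_i(k)+\hat u_i)$ for $i\in\mathcal{I}_u$; $\hat\alpha_i(k)=0$ for all $k$ and $i\in\mathcal{I}\setminus\mathcal{I}_u$; $\hat u\in\mathbb{A}$; $\hat f(0)=f_0$, $\hat\omega(0)=\omega_0$, $\hat\alpha(0)=a_0$; $\underline\omega_i-\beta\leqslant\hat\omega_i(k+1)\leqslant\bar\omega_i+\beta$ for all $i\in\mathcal{I}_\omega$; and $|\hat u_i|\leqslant\epsilon_i|a_{0,i}|$ for all $i\in\mathcal{I}_u$. Admissible $z$ are those with $a_0\in\mathbb{A}$. *)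

theory Defs
  imports "HOL-Analysis.Analysis"
begin

text \<open>Vertices are the elements of a finite type 'n (so n = CARD('n)), edges the
elements of a finite type 'm (m = CARD('m)). The fixed orientation of edge k is
given by its positive end pos k and its negative end neg k.\<close>

definition incidence :: "('m \<Rightarrow> 'n) \<Rightarrow> ('m \<Rightarrow> 'n) \<Rightarrow> real^'n^'m" where
  "incidence pos neg = (\<chi> k i. if i = pos k then 1 else if i = neg k then -1 else 0)"

definition connected_simple_graph :: "('m::finite \<Rightarrow> 'n::finite) \<Rightarrow> ('m \<Rightarrow> 'n) \<Rightarrow> bool" where
  "connected_simple_graph pos neg \<longleftrightarrow>
     (\<forall>k. pos k \<noteq> neg k) \<and>
     (\<forall>k k'. {pos k, neg k} = {pos k', neg k'} \<longrightarrow> k = k') \<and>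
     (\<forall>i j. (i, j) \<in> ({(pos k, neg k) | k. True} \<union> {(neg k, pos k) | k. True})\<^sup>*)"

definition is_pos_diag :: "real^'a^'a \<Rightarrow> bool" where
  "is_pos_diag A \<longleftrightarrow> (\<forall>i j. i \<noteq> j \<longrightarrow> A $ i $ j = 0) \<and> (\<forall>i. A $ i $ i > 0)"

definition setA :: "'n set \<Rightarrow> (real^'n) set" where
  "setA Iu = {y. \<forall>w. w \<notin> Iu \<longrightarrow> y $ w = 0}"

type_synonym ('m,'n) sol =
  "(nat \<Rightarrow> real^'m) \<times> (nat \<Rightarrow> real^'n) \<times> (nat \<Rightarrow> real^'n) \<times> (real^'n) \<times> real"

text \<open>Decision trajectories are functions
on nat; by convention they vanish beyond the horizon N, so that they faithfully
represent the matrices F, Omega, A with columns 0..N.\<close>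
definition R_feasible ::
  "real \<Rightarrow> nat \<Rightarrow> real^'m^'m \<Rightarrow> real^'n^'m \<Rightarrow> real^'n^'n \<Rightarrow> real^'n^'n
   \<Rightarrow> ('n \<Rightarrow> real) \<Rightarrow> 'n set \<Rightarrow> 'n set \<Rightarrow> ('n \<Rightarrow> real) \<Rightarrow> ('n \<Rightarrow> real) \<Rightarrow> ('n \<Rightarrow> real)
   \<Rightarrow> (nat \<Rightarrow> real^'n) \<Rightarrow> real^'m \<Rightarrow> real^'n \<Rightarrow> real^'n \<Rightarrow> ('m,'n) sol \<Rightarrow> bool" where
  "R_feasible T N Yb D M E Ti Iu Iw wlo whi eps P f0 w0 a0 s \<longleftrightarrow>
    (case s of (F, W, Al, u, \<beta>) \<Rightarrow>
      (\<forall>k<N. F (k+1) = F k + T *\<^sub>R (Yb *v (D *v W k))) \<and>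
      (\<forall>k<N. M *v W (k+1) = M *v W k + T *\<^sub>R (- (E *v W k) - ((transpose D) *v F k) + P k + u)) \<and>
      (\<forall>k<N. \<forall>i\<in>Iu. Al (k+1) $ i = Al k $ i + T * (- Al k $ i / Ti i - W k $ i + u $ i)) \<and>
      (\<forall>k\<le>N. \<forall>i. i \<notin> Iu \<longrightarrow> Al k $ i = 0) \<and>
      u \<in> setA Iu \<and>
      F 0 = f0 \<and> W 0 = w0 \<and> Al 0 = a0 \<and>
      (\<forall>k<N. \<forall>i\<in>Iw. wlo i - \<beta> \<le> W (k+1) $ i \<and> W (k+1) $ i \<le> whi i + \<beta>) \<and>
      (\<forall>i\<in>Iu. \<bar>u $ i\<bar> \<le> eps i * \<bar>a0 $ i\<bar>) \<and>
      (\<forall>k>N. F k = 0 \<and> W k = 0 \<and> Al k = 0))"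

definition R_cost :: "('n::finite \<Rightarrow> real) \<Rightarrow> real \<Rightarrow> 'n set \<Rightarrow> ('m,'n) sol \<Rightarrow> real" where
  "R_cost c d Iu s = (case s of (F, W, Al, u, \<beta>) \<Rightarrow> (\<Sum>i\<in>Iu. c i * (u $ i)\<^sup>2) + d * \<beta>\<^sup>2)"

definition R_optimal ::
  "real \<Rightarrow> nat \<Rightarrow> real^'m^'m \<Rightarrow> real^'n^'m \<Rightarrow> real^'n^'n \<Rightarrow> real^'n^'n
   \<Rightarrow> ('n \<Rightarrow> real) \<Rightarrow> 'n set \<Rightarrow> 'n set \<Rightarrow> ('n \<Rightarrow> real) \<Rightarrow> ('n \<Rightarrow> real) \<Rightarrow> ('n \<Rightarrow> real)
   \<Rightarrow> ('n \<Rightarrow> real) \<Rightarrow> real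
   \<Rightarrow> (nat \<Rightarrow> real^'n) \<Rightarrow> real^'m \<Rightarrow> real^'n \<Rightarrow> real^'n \<Rightarrow> ('m,'n) sol \<Rightarrow> bool" where
  "R_optimal T N Yb D M E Ti Iu Iw wlo whi eps c d P f0 w0 a0 s \<longleftrightarrow>
     R_feasible T N Yb D M E Ti Iu Iw wlo whi eps P f0 w0 a0 s \<and>
     (\<forall>s'. R_feasible T N Yb D M E Ti Iu Iw wlo whi eps P f0 w0 a0 s' \<longrightarrow>
        R_cost c d Iu s \<le> R_cost c d Iu s')"

definition u_opt ::
  "real \<Rightarrow> nat \<Rightarrow> real^'m^'m \<Rightarrow> real^'n^'m \<Rightarrow> real^'n^'n \<Rightarrow> real^'n^'n
   \<Rightarrow> ('n \<Rightarrow> real) \<Rightarrow> 'n set \<Rightarrow> 'n set \<Rightarrow> ('n \<Rightarrow> real) \<Rightarrow> ('n \<Rightarrow> real) \<Rightarrow> ('n \<Rightarrow> real)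
   \<Rightarrow> ('n \<Rightarrow> real) \<Rightarrow> real
   \<Rightarrow> (nat \<Rightarrow> real^'n) \<Rightarrow> real^'m \<Rightarrow> real^'n \<Rightarrow> real^'n \<Rightarrow> real^'n" where
  "u_opt T N Yb D M E Ti Iu Iw wlo whi eps c d P f0 w0 a0 =
     fst (snd (snd (snd (THE s. R_optimal T N Yb D M E Ti Iu Iw wlo whi eps c d P f0 w0 a0 s))))"

text \<open>A row of a matrix acting on the stacked vector z = (p(0),...,p(N-1), f0, w0, a0)
is given by its coefficient blocks (cP, cf, cw, ca); this is its value at z.\<close>
type_synonym ('m,'n) zrow = "(nat \<Rightarrow> real^'n) \<times> (real^'m) \<times> (real^'n) \<times> (real^'n)"

definition zlin :: "nat \<Rightarrow> ('m,'n) zrow \<Rightarrow> (nat \<Rightarrow> real^'n) \<Rightarrow> real^'m \<Rightarrow> real^'n \<Rightarrow> real^'n \<Rightarrow> real" where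
  "zlin N r P f0 w0 a0 = (case r of (cP, cf, cw, ca) \<Rightarrow>
      (\<Sum>k<N. cP k \<bullet> P k) + cf \<bullet> f0 + cw \<bullet> w0 + ca \<bullet> a0)"

definition z_continuous ::
  "nat \<Rightarrow> 'n set \<Rightarrow> ((nat \<Rightarrow> real^'n) \<Rightarrow> real^'m \<Rightarrow> real^'n \<Rightarrow> real^'n \<Rightarrow> real^'n) \<Rightarrow> bool" where
  "z_continuous N Iu g \<longleftrightarrow>
     (\<forall>P f0 w0 a0. a0 \<in> setA Iu \<longrightarrow>
       (\<forall>\<epsilon>>0. \<exists>\<delta>>0. \<forall>P' f0' w0' a0'. a0' \<in> setA Iu \<longrightarrow>
          (\<forall>k<N. dist (P' k) (P k) < \<delta>) \<longrightarrow> dist f0' f0 < \<delta> \<longrightarrow> dist w0' w0 < \<delta> \<longrightarrow>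
          dist a0' a0 < \<delta> \<longrightarrow> dist (g P' f0' w0' a0') (g P f0 w0 a0) < \<epsilon>))"

end

theory Submission
  imports Defs
begin



lemma conic_caratheodory:
  fixes X :: "'v::euclidean_space set"
  shows "finite X \<Longrightarrow> (\<forall>x\<in>X. \<mu> x \<ge> 0) \<Longrightarrow> v = (\<Sum>x\<in>X. \<mu> x *\<^sub>R x) \<Longrightarrow>
     \<exists>T\<subseteq>X. independent T \<and> (\<exists>\<nu>. (\<forall>x\<in>T. \<nu> x \<ge> 0) \<and> v = (\<Sum>x\<in>T. \<nu> x *\<^sub>R x))"
proof (induction X arbitrary: \<mu> rule: finite_psubset_induct)
  case (psubset X)
  show ?case
  proof (cases "independent X")
    case True
    then show ?thesis using psubset(3) psubset(4) by blast
  next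
    case False
    then obtain c0 where c0: "\<exists>w\<in>X. c0 w \<noteq> 0" "(\<Sum>x\<in>X. c0 x *\<^sub>R x) = 0"
      using dependent_finite[OF psubset(1)] by blast
    obtain c where c: "\<exists>w\<in>X. c w > 0" "(\<Sum>x\<in>X. c x *\<^sub>R x) = 0"
    proof (cases "\<exists>w\<in>X. c0 w > 0")
      case True
      show ?thesis by (rule that[of c0]) (use c0 True in auto)
    next
      case False
      from c0(1) obtain w where w: "w \<in> X" "c0 w \<noteq> 0" by blast
      with False have "c0 w < 0" by (meson linorder_neqE_linordered_idom)
      then have "\<exists>w\<in>X. (- c0 w) > 0" using w by auto
      moreover have "(\<Sum>x\<in>X. (- c0 x) *\<^sub>R x) = 0"
        unfolding scaleR_minus_left sum_negf using c0(2) by simp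
      ultimately show ?thesis by (rule that)
    qed
    define Xp where "Xp = {x\<in>X. c x > 0}"
    have fXp: "finite Xp" "Xp \<noteq> {}" using psubset(1) c(1) by (auto simp: Xp_def)
    define t where "t = Min ((\<lambda>x. \<mu> x / c x) ` Xp)"
    have "t \<in> (\<lambda>x. \<mu> x / c x) ` Xp" unfolding t_def using fXp by (intro Min_in) auto
    then obtain x0 where x0: "x0 \<in> Xp" "t = \<mu> x0 / c x0" by blast
    have tle: "t \<le> \<mu> x / c x" if "x \<in> Xp" for x
      unfolding t_def using fXp that by auto
    define \<mu>' where "\<mu>' x = \<mu> x - t * c x" for x
    have t0: "t \<ge> 0" using x0 psubset(3) by (auto simp: Xp_def)
    have mu'0: "\<mu>' x \<ge> 0" if "x \<in> X" for x
    proof (cases "c x > 0")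
      case True
      then have "t \<le> \<mu> x / c x" using tle that by (auto simp: Xp_def)
      then have "t * c x \<le> \<mu> x" using True by (simp add: pos_le_divide_eq)
      then show ?thesis by (simp add: \<mu>'_def)
    next
      case False
      then have "t * c x \<le> 0" using t0 mult_nonneg_nonpos[of t "c x"] by simp
      moreover have "\<mu> x \<ge> 0" using psubset(3) that by blast
      ultimately show ?thesis by (simp add: \<mu>'_def)
    qed
    have mux0: "\<mu>' x0 = 0" using x0 by (auto simp: \<mu>'_def Xp_def)
    have "v = (\<Sum>x\<in>X. \<mu>' x *\<^sub>R x)"
    proof -
      have "(\<Sum>x\<in>X. \<mu>' x *\<^sub>R x) = (\<Sum>x\<in>X. \<mu> x *\<^sub>R x) - t *\<^sub>R (\<Sum>x\<in>X. c x *\<^sub>R x)"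
        by (simp add: \<mu>'_def scaleR_diff_left sum_subtractf scaleR_sum_right)
      then show ?thesis using c(2) psubset(4) by simp
    qed
    also have "\<dots> = (\<Sum>x\<in>X - {x0}. \<mu>' x *\<^sub>R x)"
      using mux0 x0(1) psubset(1) sum.remove[of X x0 "\<lambda>x. \<mu>' x *\<^sub>R x"] by (simp add: Xp_def)
    finally have v': "v = (\<Sum>x\<in>X - {x0}. \<mu>' x *\<^sub>R x)" .
    have "X - {x0} \<subset> X" using x0(1) by (auto simp: Xp_def)
    from psubset(2)[OF this, of \<mu>'] mu'0 v'
    show ?thesis by blast
  qed
qed


lemma comb_convex_cone:
  fixes X :: "'v::euclidean_space set"
  assumes "finite X"
  shows "convex_cone {v. \<exists>\<mu>. (\<forall>x\<in>X. \<mu> x \<ge> 0) \<and> v = (\<Sum>x\<in>X. \<mu> x *\<^sub>R x)}"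
  unfolding convex_cone_iff
proof (intro conjI ballI allI impI)
  show "0 \<in> {v. \<exists>\<mu>. (\<forall>x\<in>X. \<mu> x \<ge> 0) \<and> v = (\<Sum>x\<in>X. \<mu> x *\<^sub>R x)}"
    by (rule CollectI, rule exI[of _ "\<lambda>_. 0"]) simp
next
  fix v w assume "v \<in> {v. \<exists>\<mu>. (\<forall>x\<in>X. \<mu> x \<ge> 0) \<and> v = (\<Sum>x\<in>X. \<mu> x *\<^sub>R x)}"
    "w \<in> {v. \<exists>\<mu>. (\<forall>x\<in>X. \<mu> x \<ge> 0) \<and> v = (\<Sum>x\<in>X. \<mu> x *\<^sub>R x)}"
  then obtain \<mu> \<nu> where "\<forall>x\<in>X. \<mu> x \<ge> 0" "v = (\<Sum>x\<in>X. \<mu> x *\<^sub>R x)"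
    "\<forall>x\<in>X. \<nu> x \<ge> 0" "w = (\<Sum>x\<in>X. \<nu> x *\<^sub>R x)" by blast
  then show "v + w \<in> {v. \<exists>\<mu>. (\<forall>x\<in>X. \<mu> x \<ge> 0) \<and> v = (\<Sum>x\<in>X. \<mu> x *\<^sub>R x)}"
    by (intro CollectI exI[of _ "\<lambda>x. \<mu> x + \<nu> x"]) (simp add: scaleR_add_left sum.distrib)
next
  fix v and c :: real assume "v \<in> {v. \<exists>\<mu>. (\<forall>x\<in>X. \<mu> x \<ge> 0) \<and> v = (\<Sum>x\<in>X. \<mu> x *\<^sub>R x)}" "0 \<le> c"
  then obtain \<mu> where "\<forall>x\<in>X. \<mu> x \<ge> 0" "v = (\<Sum>x\<in>X. \<mu> x *\<^sub>R x)" by blast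
  then show "c *\<^sub>R v \<in> {v. \<exists>\<mu>. (\<forall>x\<in>X. \<mu> x \<ge> 0) \<and> v = (\<Sum>x\<in>X. \<mu> x *\<^sub>R x)}"
    using \<open>0 \<le> c\<close>
    by (intro CollectI exI[of _ "\<lambda>x. c * \<mu> x"]) (simp add: scaleR_sum_right)
qed

lemma farkas_cone:
  fixes X :: "'v::euclidean_space set"
  assumes fin: "finite X" and H: "\<forall>d. (\<forall>x\<in>X. x \<bullet> d \<le> 0) \<longrightarrow> v \<bullet> d \<le> 0"
  shows "\<exists>\<mu>. (\<forall>x\<in>X. \<mu> x \<ge> 0) \<and> v = (\<Sum>x\<in>X. \<mu> x *\<^sub>R x)"
proof -
  let ?C = "convex_cone hull X"
  have vC: "v \<in> ?C"
  proof (rule ccontr)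
    assume "v \<notin> ?C"
    then obtain a b where ab: "a \<bullet> v < b" "\<forall>x\<in>?C. b < a \<bullet> x"
      using separating_hyperplane_closed_point[OF convex_convex_cone_hull closed_convex_cone_hull[OF fin]]
      by metis
    have "b < a \<bullet> 0" using ab(2) convex_cone_hull_contains_0[of X] by (rule bspec)
    then have b0: "b < 0" by simp
    have ax: "a \<bullet> x \<ge> 0" if "x \<in> X" for x
    proof (rule ccontr)
      assume "\<not> a \<bullet> x \<ge> 0"
      then have neg: "a \<bullet> x < 0" by simp
      define t where "t = b / (a \<bullet> x)"
      have t0: "t \<ge> 0" using neg b0 by (simp add: t_def divide_nonpos_neg)
      have "x \<in> ?C" using that hull_subset[of X convex_cone] by (rule subsetD[rotated])
      then have "t *\<^sub>R x \<in> ?C"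
        using convex_cone_scaleR[OF convex_cone_convex_cone_hull t0] by blast
      with ab(2) have "b < a \<bullet> (t *\<^sub>R x)" by (rule bspec)
      moreover have "a \<bullet> (t *\<^sub>R x) = b" using neg by (simp add: t_def)
      ultimately show False by simp
    qed
    have "\<forall>x\<in>X. x \<bullet> (- a) \<le> 0" using ax by (simp add: inner_commute)
    then have "v \<bullet> (- a) \<le> 0" using H by blast
    then have "a \<bullet> v \<ge> 0" by (simp add: inner_commute)
    then show False using ab(1) b0 by simp
  qed
  have "?C \<subseteq> {v. \<exists>\<mu>. (\<forall>x\<in>X. \<mu> x \<ge> 0) \<and> v = (\<Sum>x\<in>X. \<mu> x *\<^sub>R x)}"
  proof (rule hull_minimal)
    show "X \<subseteq> {v. \<exists>\<mu>. (\<forall>x\<in>X. \<mu> x \<ge> 0) \<and> v = (\<Sum>x\<in>X. \<mu> x *\<^sub>R x)}"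
    proof
      fix y assume y: "y \<in> X"
      show "y \<in> {v. \<exists>\<mu>. (\<forall>x\<in>X. \<mu> x \<ge> 0) \<and> v = (\<Sum>x\<in>X. \<mu> x *\<^sub>R x)}"
      proof (intro CollectI exI[of _ "\<lambda>x. if x = y then 1 else 0"] conjI)
        have "(\<Sum>x\<in>X. (if x = y then 1 else 0) *\<^sub>R x) = (\<Sum>x\<in>X. if x = y then x else 0)"
          by (intro sum.cong) auto
        also have "\<dots> = y" using y fin by (simp add: sum.delta')
        finally show "y = (\<Sum>x\<in>X. (if x = y then 1 else 0) *\<^sub>R x)" by simp
      qed auto
    qed
    show "convex_cone {v. \<exists>\<mu>. (\<forall>x\<in>X. \<mu> x \<ge> 0) \<and> v = (\<Sum>x\<in>X. \<mu> x *\<^sub>R x)}"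
      by (rule comb_convex_cone[OF fin])
  qed
  with vC show ?thesis by blast
qed

lemma indep_idx:
  fixes a :: "'r \<Rightarrow> 'v::euclidean_space"
  assumes "inj_on a J" "independent (a ` J)" "(\<Sum>j\<in>J. c j *\<^sub>R a j) = 0"
  shows "\<forall>j\<in>J. c j = 0"
proof -
  have ie: "\<forall>c. (\<Sum>v\<in>a ` J. c v *\<^sub>R v) = 0 \<longrightarrow> (\<forall>v\<in>a ` J. c v = 0)"
    using independent_explicit[THEN iffD1, OF assms(2)] by (rule conjunct2)
  have "(\<Sum>x\<in>a ` J. c (inv_into J a x) *\<^sub>R x) = (\<Sum>j\<in>J. c (inv_into J a (a j)) *\<^sub>R a j)"
    using sum.reindex[OF assms(1), of "\<lambda>x. c (inv_into J a x) *\<^sub>R x"] by simp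
  also have "\<dots> = (\<Sum>j\<in>J. c j *\<^sub>R a j)"
    using assms(1) by (intro sum.cong) (auto simp: inv_into_f_f)
  finally have "(\<Sum>x\<in>a ` J. c (inv_into J a x) *\<^sub>R x) = 0" using assms(3) by simp
  then have "\<forall>x\<in>a ` J. c (inv_into J a x) = 0"
    using ie by (rule_tac mp[OF spec[OF ie]])
  then show ?thesis using assms(1) by (auto simp: inv_into_f_f)
qed

definition Kset :: "('r \<Rightarrow> 'v::euclidean_space) \<Rightarrow> 'r set \<Rightarrow> ('r \<Rightarrow> real) \<Rightarrow> 'v set" where
  "Kset a R b = {y. \<forall>j\<in>R. a j \<bullet> y \<le> b j}"

lemma Kset_closed: "finite R \<Longrightarrow> closed (Kset a R b)"
proof -
  have "Kset a R b = (\<Inter>j\<in>R. {y. a j \<bullet> y \<le> b j})" by (auto simp: Kset_def)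
  then show ?thesis by (simp add: closed_INT closed_halfspace_le)
qed

lemma Kset_convex: "convex (Kset a R b)"
proof -
  have "Kset a R b = (\<Inter>j\<in>R. {y. a j \<bullet> y \<le> b j})" by (auto simp: Kset_def)
  then show ?thesis by (simp add: convex_INT convex_halfspace_le)
qed

lemma kkt:
  fixes a :: "'r \<Rightarrow> 'v::euclidean_space"
  assumes finR: "finite R" and ne: "Kset a R b \<noteq> {}"
  shows "\<exists>y J lam. y \<in> Kset a R b \<and> (\<forall>y'\<in>Kset a R b. y \<bullet> y \<le> y' \<bullet> y') \<and> J \<subseteq> R \<and> inj_on a J \<and>
     independent (a ` J) \<and> (\<forall>j\<in>J. lam j \<ge> 0) \<and> y = - (\<Sum>j\<in>J. lam j *\<^sub>R a j) \<and> (\<forall>j\<in>J. a j \<bullet> y = b j)"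
proof -
  let ?K = "Kset a R b"
  define y where "y = closest_point ?K 0"
  have yK: "y \<in> ?K"
    using closest_point_exists(1)[OF Kset_closed[OF finR] ne] unfolding y_def by blast
  have ymin: "\<forall>z\<in>?K. dist 0 y \<le> dist 0 z"
    using closest_point_exists(2)[OF Kset_closed[OF finR] ne] unfolding y_def by blast
  have ymin2: "y \<bullet> y \<le> z \<bullet> z" if "z \<in> ?K" for z
  proof -
    have "norm y \<le> norm z" using ymin that by simp
    then have "norm y ^ 2 \<le> norm z ^ 2" by (simp add: power_mono)
    then show ?thesis by (simp add: power2_norm_eq_inner)
  qed
  have var: "y \<bullet> (z - y) \<ge> 0" if "z \<in> ?K" for z
    using any_closest_point_dot[OF Kset_convex Kset_closed[OF finR] yK that ymin] by simp
  define A where "A = {j\<in>R. a j \<bullet> y = b j}"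
  have finA: "finite A" using finR by (simp add: A_def)
  have dir: "(- y) \<bullet> d \<le> 0" if hd: "\<forall>x\<in>a ` A. x \<bullet> d \<le> 0" for d
  proof -
    have ev: "eventually (\<lambda>t. a j \<bullet> (y + t *\<^sub>R d) \<le> b j) (at_right (0::real))" if "j \<in> R" for j
    proof (cases "j \<in> A")
      case True
      then have ajy: "a j \<bullet> y = b j" and ajd: "a j \<bullet> d \<le> 0" using hd by (auto simp: A_def)
      have "eventually (\<lambda>t::real. t > 0) (at_right 0)" by (simp add: eventually_at_right_less)
      then show ?thesis
      proof eventually_elim
        case (elim t)
        then have "t * (a j \<bullet> d) \<le> 0" using ajd mult_nonneg_nonpos[of t "a j \<bullet> d"] by simp
        then show ?case using ajy by (simp add: inner_add_right)
      qed
    next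
      case False
      then have lt: "a j \<bullet> y < b j" using yK that by (auto simp: A_def Kset_def le_less)
      have "((\<lambda>t::real. a j \<bullet> (y + t *\<^sub>R d)) \<longlongrightarrow> a j \<bullet> (y + 0 *\<^sub>R d)) (at_right 0)"
        by (intro tendsto_intros)
      then have "eventually (\<lambda>t. a j \<bullet> (y + t *\<^sub>R d) < b j) (at_right (0::real))"
        using lt by (intro order_tendstoD(2)) auto
      then show ?thesis by eventually_elim simp
    qed
    have "eventually (\<lambda>t. \<forall>j\<in>R. a j \<bullet> (y + t *\<^sub>R d) \<le> b j) (at_right (0::real))"
      using ev finR by (simp add: eventually_ball_finite)
    moreover have "eventually (\<lambda>t::real. t > 0) (at_right 0)" by (simp add: eventually_at_right_less)
    ultimately have evall: "eventually (\<lambda>t. t > 0 \<and> (\<forall>j\<in>R. a j \<bullet> (y + t *\<^sub>R d) \<le> b j)) (at_right (0::real))"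
      by eventually_elim simp
    have "\<exists>t. t > 0 \<and> (\<forall>j\<in>R. a j \<bullet> (y + t *\<^sub>R d) \<le> b j)"
      by (rule eventually_happens'[OF _ evall]) simp
    then obtain t :: real where t: "t > 0" "\<forall>j\<in>R. a j \<bullet> (y + t *\<^sub>R d) \<le> b j"
      by blast
    then have "y + t *\<^sub>R d \<in> ?K" by (simp add: Kset_def)
    from var[OF this] have "t * (y \<bullet> d) \<ge> 0" by simp
    then have "y \<bullet> d \<ge> 0" using t(1) by (simp add: zero_le_mult_iff)
    then show ?thesis by simp
  qed
  obtain \<mu> where mu: "\<forall>x\<in>a ` A. \<mu> x \<ge> 0" "- y = (\<Sum>x\<in>a ` A. \<mu> x *\<^sub>R x)"
    using farkas_cone[of "a ` A" "- y"] finA dir by blast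
  obtain T \<nu> where T: "T \<subseteq> a ` A" "independent T" "\<forall>x\<in>T. \<nu> x \<ge> 0" "- y = (\<Sum>x\<in>T. \<nu> x *\<^sub>R x)"
    using conic_caratheodory[of "a ` A" \<mu> "- y"] finA mu by blast
  define J where "J = inv_into A a ` T"
  have JA: "J \<subseteq> A" using T(1) by (auto simp: J_def inv_into_into)
  have "a ` J = (\<lambda>x. a (inv_into A a x)) ` T" by (simp add: J_def image_image)
  also have "\<dots> = (\<lambda>x. x) ` T"
  proof (rule image_cong[OF refl])
    fix x assume "x \<in> T"
    then have "x \<in> a ` A" using T(1) by auto
    then show "a (inv_into A a x) = x" by (rule f_inv_into_f)
  qed
  finally have aJ: "a ` J = T" by (simp only: image_ident)
  have injJ: "inj_on a J"
  proof (rule inj_onI)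
    fix x z assume xz: "x \<in> J" "z \<in> J" "a x = a z"
    then obtain x' z' where x': "x' \<in> T" "z' \<in> T" "x = inv_into A a x'" "z = inv_into A a z'"
      by (auto simp: J_def)
    have "x' \<in> a ` A" "z' \<in> a ` A" using x' T(1) by auto
    then have "a x = x'" "a z = z'" using x' f_inv_into_f by metis+
    then show "x = z" using xz x' by simp
  qed
  have "(\<Sum>j\<in>J. \<nu> (a j) *\<^sub>R a j) = (\<Sum>x\<in>T. \<nu> x *\<^sub>R x)"
    using sum.reindex[OF injJ, of "\<lambda>x. \<nu> x *\<^sub>R x"] aJ by simp
  then have ysum: "y = - (\<Sum>j\<in>J. \<nu> (a j) *\<^sub>R a j)" using T(4) by (metis minus_minus)
  show ?thesis
  proof (intro exI conjI)
    show "y \<in> ?K" by (rule yK)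
    show "\<forall>y'\<in>?K. y \<bullet> y \<le> y' \<bullet> y'" using ymin2 by blast
    show "J \<subseteq> R" using JA by (auto simp: A_def)
    show "inj_on a J" by (rule injJ)
    show "independent (a ` J)" using aJ T(2) by simp
    show "\<forall>j\<in>J. \<nu> (a j) \<ge> 0" using aJ T(3) by auto
    show "y = - (\<Sum>j\<in>J. \<nu> (a j) *\<^sub>R a j)" by (rule ysum)
    show "\<forall>j\<in>J. a j \<bullet> y = b j" using JA by (auto simp: A_def)
  qed
qed

lemma dual_basis_one:
  fixes a :: "'r \<Rightarrow> 'v::euclidean_space"
  assumes finJ: "finite J" and inj: "inj_on a J" and ind: "independent (a ` J)" and jJ: "j \<in> J"
  shows "\<exists>Y \<Lambda>. Y = - (\<Sum>i\<in>J. \<Lambda> i *\<^sub>R a i) \<and> (\<forall>i\<in>J. a i \<bullet> Y = (if i = j then 1 else 0))"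
proof -
  let ?S = "a ` (J - {j})"
  obtain p q where pq: "p \<in> span ?S" "\<And>w. w \<in> span ?S \<Longrightarrow> orthogonal q w" "a j = p + q"
    using orthogonal_subspace_decomp_exists[of ?S "a j"] by metis
  have Seq: "?S = a ` J - {a j}"
  proof
    show "?S \<subseteq> a ` J - {a j}"
    proof
      fix x assume "x \<in> ?S"
      then obtain i where i: "i \<in> J" "i \<noteq> j" "x = a i" by auto
      then have "a i \<noteq> a j" using inj jJ by (meson inj_on_contraD)
      then show "x \<in> a ` J - {a j}" using i by auto
    qed
  qed auto
  have q0: "q \<noteq> 0"
  proof
    assume "q = 0"
    then have "a j \<in> span (a ` J - {a j})" using pq Seq by simp
    then have "dependent (a ` J)" unfolding dependent_def using jJ by blast
    then show False using ind by simp
  qed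
  have qq: "q \<bullet> q > 0" using q0 by simp
  have pqo: "p \<bullet> q = 0" using pq(2)[OF pq(1)] by (simp add: orthogonal_def inner_commute)
  have ajq: "a j \<bullet> q = q \<bullet> q" using pq(3) pqo by (simp add: inner_add_left)
  have aiq: "a i \<bullet> q = 0" if "i \<in> J" "i \<noteq> j" for i
  proof -
    have "a i \<in> span ?S" using that by (intro span_base) auto
    then have "orthogonal q (a i)" by (rule pq(2))
    then show ?thesis by (simp add: orthogonal_def inner_commute)
  qed
  define Y where "Y = (1 / (q \<bullet> q)) *\<^sub>R q"
  have spanS: "span ?S \<subseteq> span (a ` J)" by (intro span_mono) auto
  have "a j \<in> span (a ` J)" using jJ by (intro span_base) auto
  then have "q \<in> span (a ` J)" using pq spanS
    by (metis add_diff_cancel_left' span_diff subsetD)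
  then have "Y \<in> span (a ` J)" unfolding Y_def by (rule span_mul)
  then obtain u where u: "Y = (\<Sum>x\<in>a ` J. u x *\<^sub>R x)"
    using span_finite[of "a ` J"] finJ by auto
  have "Y = (\<Sum>i\<in>J. u (a i) *\<^sub>R a i)"
    using u sum.reindex[OF inj, of "\<lambda>x. u x *\<^sub>R x"] by simp
  then have Ye: "Y = - (\<Sum>i\<in>J. (- u (a i)) *\<^sub>R a i)"
    by (simp add: sum_negf)
  show ?thesis
  proof (intro exI conjI)
    show "Y = - (\<Sum>i\<in>J. (- u (a i)) *\<^sub>R a i)" by (rule Ye)
    show "\<forall>i\<in>J. a i \<bullet> Y = (if i = j then 1 else 0)"
    proof
      fix i assume "i \<in> J"
      show "a i \<bullet> Y = (if i = j then 1 else 0)"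
      proof (cases "i = j")
        case True then show ?thesis using ajq qq by (simp add: Y_def)
      next
        case False then show ?thesis using aiq[OF \<open>i \<in> J\<close> False] by (simp add: Y_def)
      qed
    qed
  qed
qed

lemma dual_basis:
  fixes a :: "'r \<Rightarrow> 'v::euclidean_space"
  assumes finJ: "finite J" and inj: "inj_on a J" and ind: "independent (a ` J)"
  shows "\<exists>Y \<Lambda>. (\<forall>j'\<in>J. Y j' = - (\<Sum>j\<in>J. \<Lambda> j j' *\<^sub>R a j)) \<and>
                 (\<forall>i\<in>J. \<forall>j\<in>J. a i \<bullet> Y j = (if i = j then 1 else 0))"
proof -
  have "\<forall>j\<in>J. \<exists>p. fst p = - (\<Sum>i\<in>J. snd p i *\<^sub>R a i) \<and> (\<forall>i\<in>J. a i \<bullet> fst p = (if i = j then 1 else 0))"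
  proof
    fix j assume "j \<in> J"
    from dual_basis_one[OF finJ inj ind this] obtain Y \<Lambda> where
      "Y = - (\<Sum>i\<in>J. \<Lambda> i *\<^sub>R a i)" "\<forall>i\<in>J. a i \<bullet> Y = (if i = j then 1 else 0)" by blast
    then show "\<exists>p. fst p = - (\<Sum>i\<in>J. snd p i *\<^sub>R a i) \<and> (\<forall>i\<in>J. a i \<bullet> fst p = (if i = j then 1 else 0))"
      by (intro exI[of _ "(Y, \<Lambda>)"]) simp
  qed
  then obtain f where f: "\<forall>j\<in>J. fst (f j) = - (\<Sum>i\<in>J. snd (f j) i *\<^sub>R a i) \<and> (\<forall>i\<in>J. a i \<bullet> fst (f j) = (if i = j then 1 else 0))"
    by (rule bchoice[elim_format]) blast
  show ?thesis
  proof (rule exI[of _ "\<lambda>j. fst (f j)"], rule exI[of _ "\<lambda>i j. snd (f j) i"], intro conjI)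
    show "\<forall>j'\<in>J. fst (f j') = - (\<Sum>j\<in>J. snd (f j') j *\<^sub>R a j)" using f by blast
    show "\<forall>i\<in>J. \<forall>j\<in>J. a i \<bullet> fst (f j) = (if i = j then 1 else 0)" using f by blast
  qed
qed

definition ysol :: "'r set \<Rightarrow> ('r \<Rightarrow> 'v::euclidean_space) \<Rightarrow> ('r \<Rightarrow> real) \<Rightarrow> 'v" where
  "ysol J Y b = (\<Sum>j\<in>J. b j *\<^sub>R Y j)"

definition goodJ :: "('r \<Rightarrow> 'v::euclidean_space) \<Rightarrow> 'r set \<Rightarrow> 'r set \<Rightarrow> ('r \<Rightarrow> 'v) \<Rightarrow> ('r \<Rightarrow> 'r \<Rightarrow> real) \<Rightarrow> bool" where
  "goodJ a R J Y \<Lambda> \<longleftrightarrow> J \<subseteq> R \<and> inj_on a J \<and> independent (a ` J) \<and>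
     (\<forall>j'\<in>J. Y j' = - (\<Sum>j\<in>J. \<Lambda> j j' *\<^sub>R a j)) \<and>
     (\<forall>i\<in>J. \<forall>j\<in>J. a i \<bullet> Y j = (if i = j then 1 else 0))"

definition regOK :: "('r \<Rightarrow> 'v::euclidean_space) \<Rightarrow> 'r set \<Rightarrow> 'r set \<Rightarrow> ('r \<Rightarrow> 'v) \<Rightarrow> ('r \<Rightarrow> 'r \<Rightarrow> real) \<Rightarrow> ('r \<Rightarrow> real) \<Rightarrow> bool" where
  "regOK a R J Y \<Lambda> b \<longleftrightarrow> (\<forall>i\<in>R. a i \<bullet> ysol J Y b \<le> b i) \<and> (\<forall>j\<in>J. 0 \<le> (\<Sum>j'\<in>J. b j' * \<Lambda> j j'))"

lemma ysol_expand:
  assumes "\<forall>j'\<in>J. Y j' = - (\<Sum>j\<in>J. \<Lambda> j j' *\<^sub>R a j)"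
  shows "ysol J Y b = - (\<Sum>j\<in>J. (\<Sum>j'\<in>J. b j' * \<Lambda> j j') *\<^sub>R a j)"
proof -
  have "ysol J Y b = (\<Sum>j'\<in>J. b j' *\<^sub>R (- (\<Sum>j\<in>J. \<Lambda> j j' *\<^sub>R a j)))"
    unfolding ysol_def using assms by (intro sum.cong) auto
  also have "\<dots> = - (\<Sum>j'\<in>J. \<Sum>j\<in>J. (b j' * \<Lambda> j j') *\<^sub>R a j)"
    by (simp add: scaleR_sum_right sum_negf)
  also have "\<dots> = - (\<Sum>j\<in>J. \<Sum>j'\<in>J. (b j' * \<Lambda> j j') *\<^sub>R a j)"
    by (subst sum.swap) simp
  also have "\<dots> = - (\<Sum>j\<in>J. (\<Sum>j'\<in>J. b j' * \<Lambda> j j') *\<^sub>R a j)"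
    by (simp add: scaleR_sum_left)
  finally show ?thesis .
qed

lemma ysol_act:
  assumes "finite J" "\<forall>i\<in>J. \<forall>j\<in>J. a i \<bullet> Y j = (if i = j then 1 else 0)" "i \<in> J"
  shows "a i \<bullet> ysol J Y b = b i"
proof -
  have "a i \<bullet> ysol J Y b = (\<Sum>j\<in>J. b j * (a i \<bullet> Y j))"
    by (simp add: ysol_def inner_sum_right)
  also have "\<dots> = (\<Sum>j\<in>J. if j = i then b j else 0)"
    using assms(2,3) by (intro sum.cong) auto
  also have "\<dots> = b i" using assms(1,3) by simp
  finally show ?thesis .
qed

lemma region_sound:
  fixes a :: "'r \<Rightarrow> 'v::euclidean_space"
  assumes finR: "finite R" and g: "goodJ a R J Y \<Lambda>" and r: "regOK a R J Y \<Lambda> b"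
  shows "ysol J Y b \<in> Kset a R b" "\<forall>y'\<in>Kset a R b. ysol J Y b \<bullet> ysol J Y b \<le> y' \<bullet> y'"
proof -
  let ?y = "ysol J Y b"
  let ?l = "\<lambda>j. (\<Sum>j'\<in>J. b j' * \<Lambda> j j')"
  have JR: "J \<subseteq> R" and finJ: "finite J" using g finR by (auto simp: goodJ_def intro: finite_subset)
  have ye: "?y = - (\<Sum>j\<in>J. ?l j *\<^sub>R a j)" using g ysol_expand by (auto simp: goodJ_def)
  have act: "a i \<bullet> ?y = b i" if "i \<in> J" for i
    using ysol_act[OF finJ _ that] g by (auto simp: goodJ_def)
  show "?y \<in> Kset a R b" using r by (simp add: Kset_def regOK_def)
  show "\<forall>y'\<in>Kset a R b. ?y \<bullet> ?y \<le> y' \<bullet> y'"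
  proof
    fix y' assume y': "y' \<in> Kset a R b"
    have "?y \<bullet> (y' - ?y) = - (\<Sum>j\<in>J. ?l j * (a j \<bullet> (y' - ?y)))"
      by (subst ye) (simp add: inner_sum_left sum_negf)
    also have "\<dots> = - (\<Sum>j\<in>J. ?l j * (a j \<bullet> y' - b j))"
      using act by (intro arg_cong[where f = uminus] sum.cong) (auto simp: inner_diff_right)
    finally have e: "?y \<bullet> (y' - ?y) = - (\<Sum>j\<in>J. ?l j * (a j \<bullet> y' - b j))" .
    have "(\<Sum>j\<in>J. ?l j * (a j \<bullet> y' - b j)) \<le> 0"
    proof (rule sum_nonpos)
      fix j assume j: "j \<in> J"
      have "?l j \<ge> 0" using r j by (simp add: regOK_def)
      moreover have "a j \<bullet> y' - b j \<le> 0" using y' j JR by (auto simp: Kset_def)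
      ultimately show "?l j * (a j \<bullet> y' - b j) \<le> 0" by (simp add: mult_nonneg_nonpos)
    qed
    then have p: "?y \<bullet> (y' - ?y) \<ge> 0" using e by simp
    have "y' \<bullet> y' = ?y \<bullet> ?y + 2 * (?y \<bullet> (y' - ?y)) + (y' - ?y) \<bullet> (y' - ?y)"
      by (simp add: inner_diff_left inner_diff_right inner_commute algebra_simps)
    moreover have "(y' - ?y) \<bullet> (y' - ?y) \<ge> 0" by simp
    ultimately show "?y \<bullet> ?y \<le> y' \<bullet> y'" using p by linarith
  qed
qed

theorem abstract_regions:
  fixes a :: "'r \<Rightarrow> 'v::euclidean_space"
  assumes finR: "finite R"
  shows "\<exists>\<J>. finite \<J> \<and> (\<forall>(J, Y, \<Lambda>)\<in>\<J>. goodJ a R J Y \<Lambda>) \<and>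
     (\<forall>b. Kset a R b \<noteq> {} \<longrightarrow> (\<exists>(J, Y, \<Lambda>)\<in>\<J>. regOK a R J Y \<Lambda> b))"
proof -
  let ?Js = "{J. J \<subseteq> R \<and> inj_on a J \<and> independent (a ` J)}"
  define pick where "pick J = (SOME p. goodJ a R J (fst p) (snd p))" for J
  have pick: "goodJ a R J (fst (pick J)) (snd (pick J))" if JJ: "J \<in> ?Js" for J
  proof -
    have finJ: "finite J" using JJ finR finite_subset by blast
    obtain Y \<Lambda> where "(\<forall>j'\<in>J. Y j' = - (\<Sum>j\<in>J. \<Lambda> j j' *\<^sub>R a j)) \<and>
                 (\<forall>i\<in>J. \<forall>j\<in>J. a i \<bullet> Y j = (if i = j then 1 else 0))"
      using dual_basis[OF finJ, of a] JJ by auto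
    then have "goodJ a R J (fst (Y, \<Lambda>)) (snd (Y, \<Lambda>))" using JJ unfolding goodJ_def fst_conv snd_conv by blast
    then show ?thesis unfolding pick_def by (rule someI)
  qed
  define \<J> where "\<J> = (\<lambda>J. (J, fst (pick J), snd (pick J))) ` ?Js"
  have fin: "finite \<J>" unfolding \<J>_def using finR by simp
  have good: "\<forall>(J, Y, \<Lambda>)\<in>\<J>. goodJ a R J Y \<Lambda>" unfolding \<J>_def using pick by fastforce
  have cover: "\<exists>(J, Y, \<Lambda>)\<in>\<J>. regOK a R J Y \<Lambda> b" if ne: "Kset a R b \<noteq> {}" for b
  proof -
    obtain y J lam where k: "y \<in> Kset a R b" "J \<subseteq> R" "inj_on a J" "independent (a ` J)"
      "\<forall>j\<in>J. lam j \<ge> 0" "y = - (\<Sum>j\<in>J. lam j *\<^sub>R a j)" "\<forall>j\<in>J. a j \<bullet> y = b j"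
      using kkt[OF finR ne] by blast
    have JJs: "J \<in> ?Js" using k by simp
    define Y where "Y = fst (pick J)"
    define \<Lambda> where "\<Lambda> = snd (pick J)"
    have g: "goodJ a R J Y \<Lambda>" using pick[OF JJs] by (simp add: Y_def \<Lambda>_def)
    have finJ: "finite J" using k(2) finR finite_subset by blast
    let ?l = "\<lambda>j. (\<Sum>j'\<in>J. b j' * \<Lambda> j j')"
    have ye: "ysol J Y b = - (\<Sum>j\<in>J. ?l j *\<^sub>R a j)" using g ysol_expand by (auto simp: goodJ_def)
    have act: "a i \<bullet> ysol J Y b = b i" if "i \<in> J" for i
      using ysol_act[OF finJ _ that] g by (auto simp: goodJ_def)
    define w where "w = ysol J Y b - y"
    have we: "w = (\<Sum>j\<in>J. (lam j - ?l j) *\<^sub>R a j)"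
      unfolding w_def ye k(6) by (simp add: scaleR_diff_left sum_subtractf)
    have aw: "a i \<bullet> w = 0" if "i \<in> J" for i
      using act[OF that] k(7) that by (simp add: w_def inner_diff_right)
    have "w \<bullet> w = (\<Sum>j\<in>J. (lam j - ?l j) * (a j \<bullet> w))"
      by (subst (1) we) (simp add: inner_sum_left)
    also have "\<dots> = 0" using aw by simp
    finally have "w = 0" by simp
    then have "(\<Sum>j\<in>J. (lam j - ?l j) *\<^sub>R a j) = 0" using we by simp
    then have "\<forall>j\<in>J. lam j - ?l j = 0" by (rule indep_idx[OF k(3) k(4)])
    then have leq: "\<forall>j\<in>J. ?l j = lam j" by simp
    have ysy: "ysol J Y b = y" using \<open>w = 0\<close> by (simp add: w_def)
    have "regOK a R J Y \<Lambda> b"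
      unfolding regOK_def using ysy k(1) k(5) leq by (simp add: Kset_def)
    moreover have "(J, Y, \<Lambda>) \<in> \<J>" unfolding \<J>_def Y_def \<Lambda>_def using JJs by blast
    ultimately show ?thesis by blast
  qed
  show ?thesis using fin good cover by blast
qed



lemma zlin_alt: "zlin N r P f0 w0 a0 =
   (\<Sum>k<N. fst r k \<bullet> P k) + fst (snd r) \<bullet> f0 + fst (snd (snd r)) \<bullet> w0 + snd (snd (snd r)) \<bullet> a0"
  by (cases r) (simp add: zlin_def)

definition zcomb :: "'r set \<Rightarrow> ('r \<Rightarrow> real) \<Rightarrow> ('r \<Rightarrow> ('m::finite,'n::finite) zrow) \<Rightarrow> ('m,'n) zrow" where
  "zcomb J f R = ((\<lambda>k. \<Sum>j\<in>J. f j *\<^sub>R fst (R j) k), (\<Sum>j\<in>J. f j *\<^sub>R fst (snd (R j))),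
     (\<Sum>j\<in>J. f j *\<^sub>R fst (snd (snd (R j)))), (\<Sum>j\<in>J. f j *\<^sub>R snd (snd (snd (R j)))))"

lemma zlin_zcomb: "zlin N (zcomb J f R) P f0 w0 a0 = (\<Sum>j\<in>J. f j * zlin N (R j) P f0 w0 a0)"
proof -
  have 1: "(\<Sum>k<N. (\<Sum>j\<in>J. f j *\<^sub>R fst (R j) k) \<bullet> P k) = (\<Sum>j\<in>J. f j * (\<Sum>k<N. fst (R j) k \<bullet> P k))"
    by (simp add: inner_sum_left sum_distrib_left) (rule sum.swap)
  show ?thesis
    unfolding zlin_alt zcomb_def fst_conv snd_conv 1
    by (simp add: inner_sum_left distrib_left sum.distrib)
qed

definition zadd :: "('m::finite,'n::finite) zrow \<Rightarrow> ('m,'n) zrow \<Rightarrow> ('m,'n) zrow" where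
  "zadd r s = ((\<lambda>k. fst r k + fst s k), fst (snd r) + fst (snd s),
     fst (snd (snd r)) + fst (snd (snd s)), snd (snd (snd r)) + snd (snd (snd s)))"

definition zsc :: "real \<Rightarrow> ('m::finite,'n::finite) zrow \<Rightarrow> ('m,'n) zrow" where
  "zsc x r = ((\<lambda>k. x *\<^sub>R fst r k), x *\<^sub>R fst (snd r), x *\<^sub>R fst (snd (snd r)), x *\<^sub>R snd (snd (snd r)))"

lemma zlin_zadd: "zlin N (zadd r s) P f0 w0 a0 = zlin N r P f0 w0 a0 + zlin N s P f0 w0 a0"
  by (simp add: zlin_alt zadd_def inner_add_left sum.distrib)

lemma zlin_zsc: "zlin N (zsc x r) P f0 w0 a0 = x * zlin N r P f0 w0 a0"
  by (simp add: zlin_alt zsc_def sum_distrib_left distrib_left)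

definition zP :: "nat \<Rightarrow> 'n \<Rightarrow> ('m::finite,'n::finite) zrow" where
  "zP k i = ((\<lambda>k'. if k' = k then axis i 1 else 0), 0, 0, 0)"
definition zF :: "'m \<Rightarrow> ('m::finite,'n::finite) zrow" where
  "zF e = ((\<lambda>k'. 0), axis e 1, 0, 0)"
definition zW :: "'n \<Rightarrow> ('m::finite,'n::finite) zrow" where
  "zW i = ((\<lambda>k'. 0), 0, axis i 1, 0)"
definition zA :: "'n \<Rightarrow> ('m::finite,'n::finite) zrow" where
  "zA i = ((\<lambda>k'. 0), 0, 0, axis i 1)"
definition z0 :: "('m::finite,'n::finite) zrow" where
  "z0 = ((\<lambda>k'. 0), 0, 0, 0)"

lemma zlin_zP: "k < N \<Longrightarrow> zlin N (zP k i) P f0 w0 a0 = P k $ i"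
proof -
  assume k: "k < N"
  have "(\<Sum>k'<N. (if k' = k then axis i 1 else 0) \<bullet> P k') = (\<Sum>k'<N. if k' = k then P k $ i else 0)"
    by (intro sum.cong) (auto simp: inner_axis inner_commute)
  also have "\<dots> = P k $ i" using k by simp
  finally show ?thesis by (simp add: zlin_alt zP_def)
qed

lemma zlin_zF: "zlin N (zF e) P f0 w0 a0 = f0 $ e"
  by (simp add: zlin_alt zF_def inner_axis inner_commute)
lemma zlin_zW: "zlin N (zW i) P f0 w0 a0 = w0 $ i"
  by (simp add: zlin_alt zW_def inner_axis inner_commute)
lemma zlin_zA: "zlin N (zA i) P f0 w0 a0 = a0 $ i"
  by (simp add: zlin_alt zA_def inner_axis inner_commute)
lemma zlin_z0: "zlin N z0 P f0 w0 a0 = 0"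
  by (simp add: zlin_alt z0_def)

definition lrep :: "nat \<Rightarrow> ((nat \<Rightarrow> real^'n) \<Rightarrow> real^'m \<Rightarrow> real^'n \<Rightarrow> real^'n \<Rightarrow> real^'n \<Rightarrow> real) \<Rightarrow> bool" where
  "lrep N h \<longleftrightarrow> (\<exists>(r::('m::finite,'n::finite) zrow) g. \<forall>P f0 w0 a0 u. h P f0 w0 a0 u = zlin N r P f0 w0 a0 + g \<bullet> u)"

lemma lrep_add: "lrep N h1 \<Longrightarrow> lrep N h2 \<Longrightarrow> lrep N (\<lambda>P f0 w0 a0 u. h1 P f0 w0 a0 u + h2 P f0 w0 a0 u)"
  unfolding lrep_def
  by (elim exE, rule_tac x="zadd r ra" in exI, rule_tac x="g + ga" in exI) (simp add: zlin_zadd inner_add_left)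

lemma lrep_cmult: "lrep N h \<Longrightarrow> lrep N (\<lambda>P f0 w0 a0 u. x * h P f0 w0 a0 u)"
  unfolding lrep_def
  by (elim exE, rule_tac x="zsc x r" in exI, rule_tac x="x *\<^sub>R g" in exI) (simp add: zlin_zsc distrib_left)

lemma lrep_neg: "lrep N h \<Longrightarrow> lrep N (\<lambda>P f0 w0 a0 u. - h P f0 w0 a0 u)"
  using lrep_cmult[of N h "-1"] by simp

lemma lrep_diff: "lrep N h1 \<Longrightarrow> lrep N h2 \<Longrightarrow> lrep N (\<lambda>P f0 w0 a0 u. h1 P f0 w0 a0 u - h2 P f0 w0 a0 u)"
  using lrep_add[of N h1 "\<lambda>P f0 w0 a0 u. - h2 P f0 w0 a0 u"] lrep_neg[of N h2] by simp

lemma lrep_div: "lrep N h \<Longrightarrow> lrep N (\<lambda>P f0 w0 a0 u. h P f0 w0 a0 u / x)"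
  using lrep_cmult[of N h "1/x"] by simp

lemma lrep_zero: "lrep N (\<lambda>P f0 w0 a0 u. 0)"
  unfolding lrep_def by (rule exI[of _ z0], rule exI[of _ 0]) (simp add: zlin_z0)

lemma lrep_sum: "finite S \<Longrightarrow> (\<And>j. j \<in> S \<Longrightarrow> lrep N (h j)) \<Longrightarrow> lrep N (\<lambda>P f0 w0 a0 u. \<Sum>j\<in>S. h j P f0 w0 a0 u)"
proof (induction S rule: finite_induct)
  case empty
  then show ?case using lrep_zero by simp
next
  case (insert x F)
  have "lrep N (\<lambda>P f0 w0 a0 u. h x P f0 w0 a0 u + (\<Sum>j\<in>F. h j P f0 w0 a0 u))"
    by (rule lrep_add) (use insert in auto)
  then show ?case using insert(1,2) by simp
qed

lemma lrep_P: "k < N \<Longrightarrow> lrep N (\<lambda>P f0 w0 a0 u. P k $ i)"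
  unfolding lrep_def by (rule exI[of _ "zP k i"], rule exI[of _ 0]) (simp add: zlin_zP)
lemma lrep_f0: "lrep N (\<lambda>P f0 w0 a0 u. f0 $ e)"
  unfolding lrep_def by (rule exI[of _ "zF e"], rule exI[of _ 0]) (simp add: zlin_zF)
lemma lrep_w0: "lrep N (\<lambda>P f0 w0 a0 u. w0 $ i)"
  unfolding lrep_def by (rule exI[of _ "zW i"], rule exI[of _ 0]) (simp add: zlin_zW)
lemma lrep_u: "lrep N (\<lambda>P f0 w0 a0 u. u $ i)"
  unfolding lrep_def by (rule exI[of _ z0], rule exI[of _ "axis i 1"]) (simp add: zlin_z0 inner_axis inner_commute)

lemma pos_diag_mult: "is_pos_diag M \<Longrightarrow> (M *v x) $ i = M $ i $ i * x $ i"
proof -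
  assume M: "is_pos_diag M"
  have "(M *v x) $ i = (\<Sum>j\<in>UNIV. M $ i $ j * x $ j)" by (simp add: matrix_vector_mult_def)
  also have "\<dots> = (\<Sum>j\<in>UNIV. if j = i then M $ i $ i * x $ i else 0)"
    using M by (intro sum.cong) (auto simp: is_pos_diag_def)
  also have "\<dots> = M $ i $ i * x $ i" by simp
  finally show ?thesis .
qed

lemma pos_diag_solve: "is_pos_diag M \<Longrightarrow> (M *v x = v) \<longleftrightarrow> x = (\<chi> i. v $ i / M $ i $ i)"
proof -
  assume M: "is_pos_diag M"
  have pos: "M $ i $ i > 0" for i using M by (simp add: is_pos_diag_def)
  have "(M *v x = v) \<longleftrightarrow> (\<forall>i. M $ i $ i * x $ i = v $ i)"
    using pos_diag_mult[OF M] by (simp add: vec_eq_iff)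
  also have "\<dots> \<longleftrightarrow> (\<forall>i. x $ i = v $ i / M $ i $ i)"
  proof -
    have "M $ i $ i * x $ i = v $ i \<longleftrightarrow> x $ i = v $ i / M $ i $ i" for i
      using pos[of i] by (auto simp: field_simps)
    then show ?thesis by simp
  qed
  also have "\<dots> \<longleftrightarrow> x = (\<chi> i. v $ i / M $ i $ i)" by (simp add: vec_eq_iff)
  finally show ?thesis .
qed

locale setting =
  fixes T :: real and N :: nat and Yb :: "real^'m::finite^'m" and D :: "real^'n::finite^'m"
    and M E :: "real^'n^'n" and Ti :: "'n \<Rightarrow> real" and Iu Iw :: "'n set"
    and wlo whi eps c :: "'n \<Rightarrow> real" and d :: real
  assumes M: "is_pos_diag M" and cpos: "\<forall>i\<in>Iu. c i > 0" and epos: "\<forall>i\<in>Iu. eps i > 0" and dpos: "d > 0"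
begin

definition nextW :: "(nat \<Rightarrow> real^'n) \<Rightarrow> real^'n \<Rightarrow> nat \<Rightarrow> real^'m \<Rightarrow> real^'n \<Rightarrow> real^'n" where
  "nextW P u k F W = (\<chi> i. (M *v W + T *\<^sub>R (- (E *v W) - (transpose D *v F) + P k + u)) $ i / M $ i $ i)"

primrec sim :: "(nat \<Rightarrow> real^'n) \<Rightarrow> real^'m \<Rightarrow> real^'n \<Rightarrow> real^'n \<Rightarrow> nat \<Rightarrow> (real^'m) \<times> (real^'n)" where
  "sim P f0 w0 u 0 = (f0, w0)"
| "sim P f0 w0 u (Suc k) = (fst (sim P f0 w0 u k) + T *\<^sub>R (Yb *v (D *v snd (sim P f0 w0 u k))),
     nextW P u k (fst (sim P f0 w0 u k)) (snd (sim P f0 w0 u k)))"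

primrec simA :: "(nat \<Rightarrow> real^'n) \<Rightarrow> real^'m \<Rightarrow> real^'n \<Rightarrow> real^'n \<Rightarrow> real^'n \<Rightarrow> nat \<Rightarrow> real^'n" where
  "simA P f0 w0 u a0 0 = a0"
| "simA P f0 w0 u a0 (Suc k) = (\<chi> i. if i \<in> Iu then simA P f0 w0 u a0 k $ i +
      T * (- simA P f0 w0 u a0 k $ i / Ti i - snd (sim P f0 w0 u k) $ i + u $ i) else 0)"

definition build :: "(nat \<Rightarrow> real^'n) \<Rightarrow> real^'m \<Rightarrow> real^'n \<Rightarrow> real^'n \<Rightarrow> real^'n \<Rightarrow> real \<Rightarrow> ('m,'n) sol" where
  "build P f0 w0 a0 u \<beta> = ((\<lambda>k. if k \<le> N then fst (sim P f0 w0 u k) else 0),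
     (\<lambda>k. if k \<le> N then snd (sim P f0 w0 u k) else 0),
     (\<lambda>k. if k \<le> N then simA P f0 w0 u a0 k else 0), u, \<beta>)"

definition rfeas :: "(nat \<Rightarrow> real^'n) \<Rightarrow> real^'m \<Rightarrow> real^'n \<Rightarrow> real^'n \<Rightarrow> real^'n \<Rightarrow> real \<Rightarrow> bool" where
  "rfeas P f0 w0 a0 u \<beta> \<longleftrightarrow> u \<in> setA Iu \<and>
     (\<forall>k<N. \<forall>i\<in>Iw. wlo i - \<beta> \<le> snd (sim P f0 w0 u (k+1)) $ i \<and> snd (sim P f0 w0 u (k+1)) $ i \<le> whi i + \<beta>) \<and>
     (\<forall>i\<in>Iu. \<bar>u $ i\<bar> \<le> eps i * \<bar>a0 $ i\<bar>)"

abbreviation "Rfeas \<equiv> R_feasible T N Yb D M E Ti Iu Iw wlo whi eps"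

lemma M_nextW: "M *v nextW P u k F W = M *v W + T *\<^sub>R (- (E *v W) - (transpose D *v F) + P k + u)"
  unfolding nextW_def using pos_diag_solve[OF M] by blast

lemma feas_build:
  assumes a0: "a0 \<in> setA Iu" and r: "rfeas P f0 w0 a0 u \<beta>"
  shows "Rfeas P f0 w0 a0 (build P f0 w0 a0 u \<beta>)"
proof -
  have Al: "\<forall>k\<le>N. \<forall>i. i \<notin> Iu \<longrightarrow> simA P f0 w0 u a0 k $ i = 0"
  proof (intro allI impI)
    fix k i assume "k \<le> N" "i \<notin> Iu"
    then show "simA P f0 w0 u a0 k $ i = 0" using a0 by (cases k) (auto simp: setA_def)
  qed
  show ?thesis
    unfolding R_feasible_def build_def prod.case
    using r Al by (auto simp: rfeas_def M_nextW)
qed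

lemma feas_is_build:
  assumes a0: "a0 \<in> setA Iu" and f: "Rfeas P f0 w0 a0 (F, W, Al, u, \<beta>)"
  shows "(F, W, Al, u, \<beta>) = build P f0 w0 a0 u \<beta> \<and> rfeas P f0 w0 a0 u \<beta>"
proof -
  from f have
    fF: "\<forall>k<N. F (k+1) = F k + T *\<^sub>R (Yb *v (D *v W k))" and
    fW: "\<forall>k<N. M *v W (k+1) = M *v W k + T *\<^sub>R (- (E *v W k) - ((transpose D) *v F k) + P k + u)" and
    fA: "\<forall>k<N. \<forall>i\<in>Iu. Al (k+1) $ i = Al k $ i + T * (- Al k $ i / Ti i - W k $ i + u $ i)" and
    fA0: "\<forall>k\<le>N. \<forall>i. i \<notin> Iu \<longrightarrow> Al k $ i = 0" and
    fu: "u \<in> setA Iu" and f0: "F 0 = f0" "W 0 = w0" "Al 0 = a0" and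
    fb: "\<forall>k<N. \<forall>i\<in>Iw. wlo i - \<beta> \<le> W (k+1) $ i \<and> W (k+1) $ i \<le> whi i + \<beta>" and
    fe: "\<forall>i\<in>Iu. \<bar>u $ i\<bar> \<le> eps i * \<bar>a0 $ i\<bar>" and
    fz: "\<forall>k>N. F k = 0 \<and> W k = 0 \<and> Al k = 0"
    unfolding R_feasible_def prod.case by blast+
  have FW: "k \<le> N \<longrightarrow> F k = fst (sim P f0 w0 u k) \<and> W k = snd (sim P f0 w0 u k)" for k
  proof (induction k)
    case 0 then show ?case using f0 by simp
  next
    case (Suc k)
    show ?case
    proof
      assume "Suc k \<le> N"
      then have k: "k < N" "k \<le> N" by auto
      with Suc have ih: "F k = fst (sim P f0 w0 u k)" "W k = snd (sim P f0 w0 u k)" by auto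
      have "F (Suc k) = fst (sim P f0 w0 u (Suc k))" using fF k ih by simp
      moreover have "W (Suc k) = snd (sim P f0 w0 u (Suc k))"
        using fW k ih pos_diag_solve[OF M] by (simp add: nextW_def)
      ultimately show "F (Suc k) = fst (sim P f0 w0 u (Suc k)) \<and> W (Suc k) = snd (sim P f0 w0 u (Suc k))" by simp
    qed
  qed
  have AA: "k \<le> N \<longrightarrow> Al k = simA P f0 w0 u a0 k" for k
  proof (induction k)
    case 0 then show ?case using f0 by simp
  next
    case (Suc k)
    show ?case
    proof
      assume "Suc k \<le> N"
      then have k: "k < N" "k \<le> N" by auto
      with Suc have ih: "Al k = simA P f0 w0 u a0 k" by auto
      have Wk: "W k = snd (sim P f0 w0 u k)" using FW k by blast
      show "Al (Suc k) = simA P f0 w0 u a0 (Suc k)"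
      proof (subst vec_eq_iff, intro allI)
        fix i
        show "Al (Suc k) $ i = simA P f0 w0 u a0 (Suc k) $ i"
        proof (cases "i \<in> Iu")
          case True then show ?thesis using fA k ih Wk by simp
        next
          case False then show ?thesis using fA0 \<open>Suc k \<le> N\<close> by simp
        qed
      qed
    qed
  qed
  have "F = (\<lambda>k. if k \<le> N then fst (sim P f0 w0 u k) else 0)"
    using FW fz by (auto simp: not_le)
  moreover have "W = (\<lambda>k. if k \<le> N then snd (sim P f0 w0 u k) else 0)"
    using FW fz by (auto simp: not_le)
  moreover have "Al = (\<lambda>k. if k \<le> N then simA P f0 w0 u a0 k else 0)"
    using AA fz by (auto simp: not_le)
  ultimately have "(F, W, Al, u, \<beta>) = build P f0 w0 a0 u \<beta>" by (simp add: build_def)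
  moreover have "rfeas P f0 w0 a0 u \<beta>"
  proof -
    have "\<forall>k<N. \<forall>i\<in>Iw. wlo i - \<beta> \<le> snd (sim P f0 w0 u (k+1)) $ i \<and> snd (sim P f0 w0 u (k+1)) $ i \<le> whi i + \<beta>"
    proof (intro allI impI ballI)
      fix k i assume "k < N" "i \<in> Iw"
      then have "W (k+1) = snd (sim P f0 w0 u (k+1))" using FW by simp
      then show "wlo i - \<beta> \<le> snd (sim P f0 w0 u (k+1)) $ i \<and> snd (sim P f0 w0 u (k+1)) $ i \<le> whi i + \<beta>"
        using fb \<open>k < N\<close> \<open>i \<in> Iw\<close> by metis
    qed
    then show ?thesis using fu fe by (simp add: rfeas_def)
  qed
  ultimately show ?thesis by blast
qed

lemma feas_iff:
  assumes a0: "a0 \<in> setA Iu"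
  shows "Rfeas P f0 w0 a0 s \<longleftrightarrow> (\<exists>u \<beta>. s = build P f0 w0 a0 u \<beta> \<and> rfeas P f0 w0 a0 u \<beta>)"
proof
  assume "Rfeas P f0 w0 a0 s"
  moreover obtain F W Al u \<beta> where "s = (F, W, Al, u, \<beta>)" by (cases s) auto
  ultimately show "\<exists>u \<beta>. s = build P f0 w0 a0 u \<beta> \<and> rfeas P f0 w0 a0 u \<beta>"
    using feas_is_build[OF a0] by metis
next
  assume "\<exists>u \<beta>. s = build P f0 w0 a0 u \<beta> \<and> rfeas P f0 w0 a0 u \<beta>"
  then show "Rfeas P f0 w0 a0 s" using feas_build[OF a0] by blast
qed

lemma cost_build: "R_cost c d Iu (build P f0 w0 a0 u \<beta>) = (\<Sum>i\<in>Iu. c i * (u $ i)\<^sup>2) + d * \<beta>\<^sup>2"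
  by (simp add: R_cost_def build_def)

end

datatype 'n row = RLo nat 'n | RHi nat 'n | RUp 'n | RUm 'n | RZp 'n | RZm 'n

context setting
begin

lemma fst_sim_Suc: "fst (sim P f0 w0 u (Suc k)) $ e = fst (sim P f0 w0 u k) $ e +
   T * (\<Sum>j\<in>UNIV. Yb $ e $ j * (\<Sum>i\<in>UNIV. D $ j $ i * snd (sim P f0 w0 u k) $ i))"
  by (simp add: matrix_vector_mult_def)

lemma snd_sim_Suc: "snd (sim P f0 w0 u (Suc k)) $ i = (1 / M $ i $ i) *
   ((\<Sum>j\<in>UNIV. M $ i $ j * snd (sim P f0 w0 u k) $ j) +
    T * (- (\<Sum>j\<in>UNIV. E $ i $ j * snd (sim P f0 w0 u k) $ j) - (\<Sum>e\<in>UNIV. D $ e $ i * fst (sim P f0 w0 u k) $ e)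
         + P k $ i + u $ i))"
  by (simp add: nextW_def matrix_vector_mult_def transpose_def)

lemma sim_lrep: "k \<le> N \<Longrightarrow> (\<forall>e. lrep N (\<lambda>P f0 w0 (a0::real^'n) u. fst (sim P f0 w0 u k) $ e)) \<and>
                          (\<forall>i. lrep N (\<lambda>P f0 w0 (a0::real^'n) u. snd (sim P f0 w0 u k) $ i))"
proof (induction k)
  case 0
  show ?case by (simp only: sim.simps fst_conv snd_conv) (intro conjI allI lrep_f0 lrep_w0)
next
  case (Suc k)
  then have k: "k < N" and IH1: "\<And>e. lrep N (\<lambda>P f0 w0 (a0::real^'n) u. fst (sim P f0 w0 u k) $ e)"
    and IH2: "\<And>i. lrep N (\<lambda>P f0 w0 (a0::real^'n) u. snd (sim P f0 w0 u k) $ i)" by auto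
  have A: "lrep N (\<lambda>P f0 w0 (a0::real^'n) u. fst (sim P f0 w0 u (Suc k)) $ e)" for e
    unfolding fst_sim_Suc
    by (intro lrep_add lrep_cmult lrep_sum finite IH1 IH2)
  have B: "lrep N (\<lambda>P f0 w0 (a0::real^'n) u. snd (sim P f0 w0 u (Suc k)) $ i)" for i
    unfolding snd_sim_Suc
    by (intro lrep_add lrep_cmult lrep_sum lrep_diff lrep_neg finite IH1 IH2 lrep_P[OF k] lrep_u)
  show ?case using A B by blast
qed

definition repW :: "nat \<Rightarrow> 'n \<Rightarrow> ('m,'n) zrow \<times> (real^'n)" where
  "repW k i = (SOME p. \<forall>P f0 w0 a0 u. snd (sim P f0 w0 u k) $ i = zlin N (fst p) P f0 w0 a0 + snd p \<bullet> u)"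

lemma repW: "k \<le> N \<Longrightarrow> snd (sim P f0 w0 u k) $ i = zlin N (fst (repW k i)) P f0 w0 a0 + snd (repW k i) \<bullet> u"
proof -
  assume "k \<le> N"
  then have "lrep N (\<lambda>P f0 w0 (a0::real^'n) u. snd (sim P f0 w0 u k) $ i)" using sim_lrep by blast
  then obtain r g where "\<forall>P f0 w0 a0 u. snd (sim P f0 w0 u k) $ i = zlin N r P f0 w0 a0 + g \<bullet> u"
    unfolding lrep_def by blast
  then have "\<exists>p. \<forall>P f0 w0 a0 u. snd (sim P f0 w0 u k) $ i = zlin N (fst p) P f0 w0 a0 + snd p \<bullet> u"
    by (intro exI[of _ "(r, g)"]) simp
  from someI_ex[OF this] show ?thesis unfolding repW_def by blast
qed

definition Rows :: "'n row set" where
  "Rows = (\<lambda>(k, i). RLo k i) ` ({..<N} \<times> Iw) \<union> (\<lambda>(k, i). RHi k i) ` ({..<N} \<times> Iw) \<union>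
          RUp ` Iu \<union> RUm ` Iu \<union> RZp ` (- Iu) \<union> RZm ` (- Iu)"

lemma finite_Rows: "finite Rows"
  by (simp add: Rows_def)

definition gy :: "real^'n \<Rightarrow> real^'n" where
  "gy g = (\<chi> q. if q \<in> Iu then g $ q / sqrt (c q) else 0)"

primrec avec :: "'n row \<Rightarrow> (real^'n) \<times> real" where
  "avec (RLo k i) = (- gy (snd (repW (k+1) i)), - 1 / sqrt d)"
| "avec (RHi k i) = (gy (snd (repW (k+1) i)), - 1 / sqrt d)"
| "avec (RUp i) = (axis i (1 / sqrt (c i)), 0)"
| "avec (RUm i) = (axis i (- 1 / sqrt (c i)), 0)"
| "avec (RZp i) = (axis i 1, 0)"
| "avec (RZm i) = (axis i (- 1), 0)"

definition zsgnA :: "'n set \<Rightarrow> 'n \<Rightarrow> ('m,'n) zrow" where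
  "zsgnA Sg i = zsc (if i \<in> Sg then eps i else - eps i) (zA i)"

primrec brow :: "'n set \<Rightarrow> 'n row \<Rightarrow> ('m,'n) zrow" where
  "brow Sg (RLo k i) = fst (repW (k+1) i)"
| "brow Sg (RHi k i) = zsc (- 1) (fst (repW (k+1) i))"
| "brow Sg (RUp i) = zsgnA Sg i"
| "brow Sg (RUm i) = zsgnA Sg i"
| "brow Sg (RZp i) = z0"
| "brow Sg (RZm i) = z0"

primrec bc :: "'n row \<Rightarrow> real" where
  "bc (RLo k i) = - wlo i"
| "bc (RHi k i) = whi i"
| "bc (RUp i) = 0"
| "bc (RUm i) = 0"
| "bc (RZp i) = 0"
| "bc (RZm i) = 0"

primrec breal :: "(nat \<Rightarrow> real^'n) \<Rightarrow> real^'m \<Rightarrow> real^'n \<Rightarrow> real^'n \<Rightarrow> 'n row \<Rightarrow> real" where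
  "breal P f0 w0 a0 (RLo k i) = zlin N (fst (repW (k+1) i)) P f0 w0 a0 - wlo i"
| "breal P f0 w0 a0 (RHi k i) = whi i - zlin N (fst (repW (k+1) i)) P f0 w0 a0"
| "breal P f0 w0 a0 (RUp i) = eps i * \<bar>a0 $ i\<bar>"
| "breal P f0 w0 a0 (RUm i) = eps i * \<bar>a0 $ i\<bar>"
| "breal P f0 w0 a0 (RZp i) = 0"
| "breal P f0 w0 a0 (RZm i) = 0"

definition sgnok :: "'n set \<Rightarrow> real^'n \<Rightarrow> bool" where
  "sgnok Sg a0 \<longleftrightarrow> (\<forall>i\<in>Iu. (i \<in> Sg \<longrightarrow> a0 $ i \<ge> 0) \<and> (i \<notin> Sg \<longrightarrow> a0 $ i \<le> 0))"

lemma b_eq: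
  assumes "sgnok Sg a0" "j \<in> Rows"
  shows "zlin N (brow Sg j) P f0 w0 a0 + bc j = breal P f0 w0 a0 j"
proof (cases j)
  case (RUp i)
  then have i: "i \<in> Iu" using assms(2) by (auto simp: Rows_def)
  then show ?thesis using assms(1) RUp
    by (cases "i \<in> Sg") (auto simp: sgnok_def zsgnA_def zlin_zsc zlin_zA abs_if)
next
  case (RUm i)
  then have i: "i \<in> Iu" using assms(2) by (auto simp: Rows_def)
  then show ?thesis using assms(1) RUm
    by (cases "i \<in> Sg") (auto simp: sgnok_def zsgnA_def zlin_zsc zlin_zA abs_if)
qed (simp_all add: zlin_zsc zlin_z0)

end

context setting
begin

definition dec :: "(real^'n) \<times> real \<Rightarrow> (real^'n) \<times> real" where
  "dec y = ((\<chi> q. if q \<in> Iu then fst y $ q / sqrt (c q) else 0), snd y / sqrt d)"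

definition enc :: "real^'n \<Rightarrow> real \<Rightarrow> (real^'n) \<times> real" where
  "enc u \<beta> = ((\<chi> q. sqrt (c q) * u $ q), sqrt d * \<beta>)"

definition zerout :: "(real^'n) \<times> real \<Rightarrow> bool" where
  "zerout y \<longleftrightarrow> (\<forall>q. q \<notin> Iu \<longrightarrow> fst y $ q = 0)"

lemma dec_setA: "fst (dec y) \<in> setA Iu"
  by (simp add: dec_def setA_def)

lemma dec_enc: "u \<in> setA Iu \<Longrightarrow> dec (enc u \<beta>) = (u, \<beta>)"
proof -
  assume u: "u \<in> setA Iu"
  have "fst (dec (enc u \<beta>)) = u"
  proof (subst vec_eq_iff, intro allI)
    fix q show "fst (dec (enc u \<beta>)) $ q = u $ q"
    proof (cases "q \<in> Iu")
      case True then have "c q > 0" using cpos by blast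
      then show ?thesis using True by (simp add: dec_def enc_def)
    next
      case False then show ?thesis using u by (simp add: dec_def enc_def setA_def)
    qed
  qed
  moreover have "snd (dec (enc u \<beta>)) = \<beta>" using dpos by (simp add: dec_def enc_def)
  ultimately show ?thesis by (metis prod.collapse)
qed

lemma zerout_enc: "u \<in> setA Iu \<Longrightarrow> zerout (enc u \<beta>)"
  by (simp add: zerout_def enc_def setA_def)

lemma enc_dec: "zerout y \<Longrightarrow> enc (fst (dec y)) (snd (dec y)) = y"
proof -
  assume z: "zerout y"
  have "fst (enc (fst (dec y)) (snd (dec y))) = fst y"
  proof (subst vec_eq_iff, intro allI)
    fix q show "fst (enc (fst (dec y)) (snd (dec y))) $ q = fst y $ q"
    proof (cases "q \<in> Iu")
      case True then have "c q > 0" using cpos by blast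
      then show ?thesis using True by (simp add: dec_def enc_def)
    next
      case False then show ?thesis using z by (simp add: dec_def enc_def zerout_def)
    qed
  qed
  moreover have "snd (enc (fst (dec y)) (snd (dec y))) = snd y" using dpos by (simp add: dec_def enc_def)
  ultimately show ?thesis by (metis prod.collapse)
qed

lemma cost_dec:
  assumes z: "zerout y"
  shows "(\<Sum>i\<in>Iu. c i * (fst (dec y) $ i)\<^sup>2) + d * (snd (dec y))\<^sup>2 = y \<bullet> y"
proof -
  have "(\<Sum>i\<in>Iu. c i * (fst (dec y) $ i)\<^sup>2) = (\<Sum>i\<in>Iu. (fst y $ i)\<^sup>2)"
  proof (intro sum.cong refl)
    fix i assume i: "i \<in> Iu"
    then have "c i > 0" using cpos by blast
    then show "c i * (fst (dec y) $ i)\<^sup>2 = (fst y $ i)\<^sup>2" using i by (simp add: dec_def power_divide)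
  qed
  also have "\<dots> = (\<Sum>i\<in>UNIV. (fst y $ i)\<^sup>2)"
    using z by (intro sum.mono_neutral_left) (auto simp: zerout_def)
  also have "\<dots> = fst y \<bullet> fst y" by (simp add: inner_vec_def power2_eq_square)
  finally have 1: "(\<Sum>i\<in>Iu. c i * (fst (dec y) $ i)\<^sup>2) = fst y \<bullet> fst y" .
  have 2: "d * (snd (dec y))\<^sup>2 = snd y \<bullet> snd y" using dpos by (simp add: dec_def power_divide power2_eq_square)
  show ?thesis using 1 2 by (simp add: inner_prod_def)
qed

lemma gy_inner: "gy g \<bullet> fst y = g \<bullet> fst (dec y)"
  unfolding inner_vec_def gy_def dec_def by (intro sum.cong) auto

lemma axis_inner: "axis i x \<bullet> v = x * v $ i"
  by (simp add: inner_axis inner_commute)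

lemma ball_Rows: "(\<forall>j\<in>Rows. Q j) \<longleftrightarrow> (\<forall>k<N. \<forall>i\<in>Iw. Q (RLo k i)) \<and> (\<forall>k<N. \<forall>i\<in>Iw. Q (RHi k i)) \<and>
   (\<forall>i\<in>Iu. Q (RUp i)) \<and> (\<forall>i\<in>Iu. Q (RUm i)) \<and> (\<forall>i. i \<notin> Iu \<longrightarrow> Q (RZp i)) \<and> (\<forall>i. i \<notin> Iu \<longrightarrow> Q (RZm i))"
  unfolding Rows_def by auto

lemma K_iff:
  "y \<in> Kset avec Rows (breal P f0 w0 a0) \<longleftrightarrow> rfeas P f0 w0 a0 (fst (dec y)) (snd (dec y)) \<and> zerout y"
proof -
  define u where "u = fst (dec y)"
  define \<beta> where "\<beta> = snd (dec y)"
  have bet: "snd y / sqrt d = \<beta>" by (simp add: \<beta>_def dec_def)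
  have ui: "fst y $ i / sqrt (c i) = u $ i" if "i \<in> Iu" for i using that by (simp add: u_def dec_def)
  have W: "snd (sim P f0 w0 u (k+1)) $ i = zlin N (fst (repW (k+1) i)) P f0 w0 a0 + snd (repW (k+1) i) \<bullet> u"
    if "k < N" for k i using repW that by simp
  have Lo: "avec (RLo k i) \<bullet> y \<le> breal P f0 w0 a0 (RLo k i) \<longleftrightarrow> wlo i - \<beta> \<le> snd (sim P f0 w0 u (k+1)) $ i"
    if "k < N" for k i
    using W[OF that, of i] bet by (simp add: inner_prod_def gy_inner u_def[symmetric]) argo
  have Hi: "avec (RHi k i) \<bullet> y \<le> breal P f0 w0 a0 (RHi k i) \<longleftrightarrow> snd (sim P f0 w0 u (k+1)) $ i \<le> whi i + \<beta>"
    if "k < N" for k i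
    using W[OF that, of i] bet by (simp add: inner_prod_def gy_inner u_def[symmetric]) argo
  have Up: "avec (RUp i) \<bullet> y \<le> breal P f0 w0 a0 (RUp i) \<longleftrightarrow> u $ i \<le> eps i * \<bar>a0 $ i\<bar>"
    if "i \<in> Iu" for i
    using ui[OF that] by (simp add: inner_prod_def axis_inner)
  have Um: "avec (RUm i) \<bullet> y \<le> breal P f0 w0 a0 (RUm i) \<longleftrightarrow> - u $ i \<le> eps i * \<bar>a0 $ i\<bar>"
    if "i \<in> Iu" for i
    using ui[OF that] by (simp add: inner_prod_def axis_inner)
  have Zp: "avec (RZp i) \<bullet> y \<le> breal P f0 w0 a0 (RZp i) \<longleftrightarrow> fst y $ i \<le> 0" for i
    by (simp add: inner_prod_def axis_inner)
  have Zm: "avec (RZm i) \<bullet> y \<le> breal P f0 w0 a0 (RZm i) \<longleftrightarrow> 0 \<le> fst y $ i" for i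
    by (simp add: inner_prod_def axis_inner)
  have "y \<in> Kset avec Rows (breal P f0 w0 a0) \<longleftrightarrow>
     (\<forall>k<N. \<forall>i\<in>Iw. avec (RLo k i) \<bullet> y \<le> breal P f0 w0 a0 (RLo k i)) \<and>
     (\<forall>k<N. \<forall>i\<in>Iw. avec (RHi k i) \<bullet> y \<le> breal P f0 w0 a0 (RHi k i)) \<and>
     (\<forall>i\<in>Iu. avec (RUp i) \<bullet> y \<le> breal P f0 w0 a0 (RUp i)) \<and>
     (\<forall>i\<in>Iu. avec (RUm i) \<bullet> y \<le> breal P f0 w0 a0 (RUm i)) \<and>
     (\<forall>i. i \<notin> Iu \<longrightarrow> avec (RZp i) \<bullet> y \<le> breal P f0 w0 a0 (RZp i)) \<and>
     (\<forall>i. i \<notin> Iu \<longrightarrow> avec (RZm i) \<bullet> y \<le> breal P f0 w0 a0 (RZm i))"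
    unfolding Kset_def mem_Collect_eq by (rule ball_Rows)
  also have "\<dots> \<longleftrightarrow>
     (\<forall>k<N. \<forall>i\<in>Iw. wlo i - \<beta> \<le> snd (sim P f0 w0 u (k+1)) $ i) \<and>
     (\<forall>k<N. \<forall>i\<in>Iw. snd (sim P f0 w0 u (k+1)) $ i \<le> whi i + \<beta>) \<and>
     (\<forall>i\<in>Iu. u $ i \<le> eps i * \<bar>a0 $ i\<bar>) \<and>
     (\<forall>i\<in>Iu. - u $ i \<le> eps i * \<bar>a0 $ i\<bar>) \<and>
     (\<forall>i. i \<notin> Iu \<longrightarrow> fst y $ i \<le> 0) \<and>
     (\<forall>i. i \<notin> Iu \<longrightarrow> 0 \<le> fst y $ i)"
    using Lo Hi Up Um Zp Zm by simp
  also have "\<dots> \<longleftrightarrow> rfeas P f0 w0 a0 u \<beta> \<and> zerout y"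
    unfolding rfeas_def zerout_def using dec_setA[of y] unfolding u_def[symmetric]
    by (auto simp: abs_le_iff simp del: sim.simps intro: order.antisym)
  finally show ?thesis by (simp add: u_def \<beta>_def)
qed

end

context setting
begin

abbreviation "Kz P f0 w0 a0 \<equiv> Kset avec Rows (breal P f0 w0 a0)"
abbreviation "Ropt \<equiv> R_optimal T N Yb D M E Ti Iu Iw wlo whi eps c d"

lemma K_feas:
  assumes a0: "a0 \<in> setA Iu" and y: "y \<in> Kz P f0 w0 a0"
  shows "Rfeas P f0 w0 a0 (build P f0 w0 a0 (fst (dec y)) (snd (dec y)))"
    and "R_cost c d Iu (build P f0 w0 a0 (fst (dec y)) (snd (dec y))) = y \<bullet> y"
proof -
  have r: "rfeas P f0 w0 a0 (fst (dec y)) (snd (dec y))" and z: "zerout y" using y K_iff by blast+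
  show "Rfeas P f0 w0 a0 (build P f0 w0 a0 (fst (dec y)) (snd (dec y)))" by (rule feas_build[OF a0 r])
  show "R_cost c d Iu (build P f0 w0 a0 (fst (dec y)) (snd (dec y))) = y \<bullet> y"
    unfolding cost_build using cost_dec[OF z] .
qed

lemma feas_K:
  assumes a0: "a0 \<in> setA Iu" and s: "Rfeas P f0 w0 a0 s"
  shows "\<exists>y\<in>Kz P f0 w0 a0. s = build P f0 w0 a0 (fst (dec y)) (snd (dec y))"
proof -
  obtain u \<beta> where s: "s = build P f0 w0 a0 u \<beta>" and r: "rfeas P f0 w0 a0 u \<beta>"
    using s feas_iff[OF a0] by blast
  have uA: "u \<in> setA Iu" using r by (simp add: rfeas_def)
  have de: "dec (enc u \<beta>) = (u, \<beta>)" by (rule dec_enc[OF uA])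
  have "enc u \<beta> \<in> Kz P f0 w0 a0" using K_iff r de zerout_enc[OF uA] by simp
  moreover have "s = build P f0 w0 a0 (fst (dec (enc u \<beta>))) (snd (dec (enc u \<beta>)))" using s de by simp
  ultimately show ?thesis by blast
qed

lemma opt_iff:
  assumes a0: "a0 \<in> setA Iu"
  shows "Ropt P f0 w0 a0 s \<longleftrightarrow> (\<exists>y\<in>Kz P f0 w0 a0. (\<forall>y'\<in>Kz P f0 w0 a0. y \<bullet> y \<le> y' \<bullet> y') \<and>
            s = build P f0 w0 a0 (fst (dec y)) (snd (dec y)))"
proof
  assume o: "Ropt P f0 w0 a0 s"
  then have f: "Rfeas P f0 w0 a0 s" and m: "\<forall>s'. Rfeas P f0 w0 a0 s' \<longrightarrow> R_cost c d Iu s \<le> R_cost c d Iu s'"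
    unfolding R_optimal_def by blast+
  obtain y where y: "y \<in> Kz P f0 w0 a0" "s = build P f0 w0 a0 (fst (dec y)) (snd (dec y))"
    using feas_K[OF a0 f] by blast
  have "y \<bullet> y \<le> y' \<bullet> y'" if y': "y' \<in> Kz P f0 w0 a0" for y'
    using m K_feas[OF a0 y'] K_feas[OF a0 y(1)] y(2) by metis
  then show "\<exists>y\<in>Kz P f0 w0 a0. (\<forall>y'\<in>Kz P f0 w0 a0. y \<bullet> y \<le> y' \<bullet> y') \<and>
            s = build P f0 w0 a0 (fst (dec y)) (snd (dec y))" using y by blast
next
  assume "\<exists>y\<in>Kz P f0 w0 a0. (\<forall>y'\<in>Kz P f0 w0 a0. y \<bullet> y \<le> y' \<bullet> y') \<and>
            s = build P f0 w0 a0 (fst (dec y)) (snd (dec y))"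
  then obtain y where y: "y \<in> Kz P f0 w0 a0" "\<forall>y'\<in>Kz P f0 w0 a0. y \<bullet> y \<le> y' \<bullet> y'"
    "s = build P f0 w0 a0 (fst (dec y)) (snd (dec y))" by blast
  have "R_cost c d Iu s \<le> R_cost c d Iu s'" if s': "Rfeas P f0 w0 a0 s'" for s'
  proof -
    obtain y' where y': "y' \<in> Kz P f0 w0 a0" "s' = build P f0 w0 a0 (fst (dec y')) (snd (dec y'))"
      using feas_K[OF a0 s'] by blast
    show ?thesis using K_feas(2)[OF a0 y'(1)] K_feas(2)[OF a0 y(1)] y(2) y'(1) y(3) y'(2) by simp
  qed
  then show "Ropt P f0 w0 a0 s" unfolding R_optimal_def using K_feas(1)[OF a0 y(1)] y(3) by blast
qed

lemma K_ne:
  assumes a0: "a0 \<in> setA Iu"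
  shows "Kz P f0 w0 a0 \<noteq> {}"
proof -
  let ?t = "\<lambda>k i. \<bar>snd (sim P f0 w0 0 (k+1)) $ i\<bar> + \<bar>wlo i\<bar> + \<bar>whi i\<bar>"
  define \<beta> where "\<beta> = (\<Sum>k<N. \<Sum>i\<in>Iw. ?t k i)"
  have tle: "?t k i \<le> \<beta>" if "k < N" "i \<in> Iw" for k i
  proof -
    have "?t k i \<le> (\<Sum>i\<in>Iw. ?t k i)"
      by (rule member_le_sum) (use that in auto)
    also have "\<dots> \<le> \<beta>" unfolding \<beta>_def
      by (rule member_le_sum[of k "{..<N}" "\<lambda>k. \<Sum>i\<in>Iw. ?t k i"]) (use that in \<open>auto intro: sum_nonneg\<close>)
    finally show ?thesis .
  qed
  have r: "rfeas P f0 w0 a0 0 \<beta>"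
    unfolding rfeas_def
  proof (intro conjI allI impI ballI)
    show "0 \<in> setA Iu" by (simp add: setA_def)
  next
    fix k i assume "k < N" "i \<in> Iw"
    from tle[OF this] show "wlo i - \<beta> \<le> snd (sim P f0 w0 0 (k+1)) $ i"
      by (smt (verit) abs_ge_self abs_ge_minus_self)
  next
    fix k i assume "k < N" "i \<in> Iw"
    from tle[OF this] show "snd (sim P f0 w0 0 (k+1)) $ i \<le> whi i + \<beta>"
      by (smt (verit) abs_ge_self abs_ge_minus_self)
  next
    fix i assume "i \<in> Iu"
    then have "eps i > 0" using epos by blast
    then show "\<bar>(0::real^'n) $ i\<bar> \<le> eps i * \<bar>a0 $ i\<bar>" by simp
  qed
  have z: "(0::real^'n) \<in> setA Iu" by (simp add: setA_def)
  have "enc 0 \<beta> \<in> Kz P f0 w0 a0" using K_iff r dec_enc[OF z] zerout_enc[OF z] by simp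
  then show ?thesis by blast
qed

lemma min_unique:
  assumes "y1 \<in> Kz P f0 w0 a0" "\<forall>y'\<in>Kz P f0 w0 a0. y1 \<bullet> y1 \<le> y' \<bullet> y'"
    "y2 \<in> Kz P f0 w0 a0" "\<forall>y'\<in>Kz P f0 w0 a0. y2 \<bullet> y2 \<le> y' \<bullet> y'"
  shows "y1 = y2"
proof -
  have n: "dist 0 y \<le> dist 0 z" if "y \<bullet> y \<le> z \<bullet> z" for y z :: "(real^'n) \<times> real"
    using that by (simp add: norm_eq_sqrt_inner)
  show ?thesis
    by (rule any_closest_point_unique[OF Kset_convex Kset_closed[OF finite_Rows] assms(1) assms(3), of 0])
       (use assms n in blast)+
qed

lemma ex_min: "a0 \<in> setA Iu \<Longrightarrow> \<exists>y\<in>Kz P f0 w0 a0. \<forall>y'\<in>Kz P f0 w0 a0. y \<bullet> y \<le> y' \<bullet> y'"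
  using kkt[OF finite_Rows K_ne] by blast

lemma ex1_opt: "a0 \<in> setA Iu \<Longrightarrow> \<exists>!s. Ropt P f0 w0 a0 s"
proof -
  assume a0: "a0 \<in> setA Iu"
  obtain y where y: "y \<in> Kz P f0 w0 a0" "\<forall>y'\<in>Kz P f0 w0 a0. y \<bullet> y \<le> y' \<bullet> y'"
    using ex_min[OF a0] by blast
  show ?thesis
  proof (rule ex1I[of _ "build P f0 w0 a0 (fst (dec y)) (snd (dec y))"])
    show "Ropt P f0 w0 a0 (build P f0 w0 a0 (fst (dec y)) (snd (dec y)))"
      using opt_iff[OF a0] y by blast
  next
    fix s assume "Ropt P f0 w0 a0 s"
    then obtain y' where y': "y' \<in> Kz P f0 w0 a0" "\<forall>y''\<in>Kz P f0 w0 a0. y' \<bullet> y' \<le> y'' \<bullet> y''"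
      "s = build P f0 w0 a0 (fst (dec y')) (snd (dec y'))" using opt_iff[OF a0] by blast
    have "y' = y" by (rule min_unique[OF y'(1) y'(2) y(1) y(2)])
    then show "s = build P f0 w0 a0 (fst (dec y)) (snd (dec y))" using y'(3) by simp
  qed
qed

lemma uopt_char:
  assumes a0: "a0 \<in> setA Iu" and y: "y \<in> Kz P f0 w0 a0" "\<forall>y'\<in>Kz P f0 w0 a0. y \<bullet> y \<le> y' \<bullet> y'"
  shows "u_opt T N Yb D M E Ti Iu Iw wlo whi eps c d P f0 w0 a0 = fst (dec y)"
proof -
  have o: "Ropt P f0 w0 a0 (build P f0 w0 a0 (fst (dec y)) (snd (dec y)))"
    using opt_iff[OF a0] y by blast
  have "(THE s. Ropt P f0 w0 a0 s) = build P f0 w0 a0 (fst (dec y)) (snd (dec y))"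
    by (rule the1_equality[OF ex1_opt[OF a0] o])
  then show ?thesis unfolding u_opt_def by (simp add: build_def)
qed

end

lemma finite_delta:
  fixes Q :: "'a \<Rightarrow> real \<Rightarrow> bool"
  assumes "finite S" "\<forall>x\<in>S. \<exists>\<delta>>0. \<forall>\<delta>'. 0 < \<delta>' \<and> \<delta>' \<le> \<delta> \<longrightarrow> Q x \<delta>'"
  shows "\<exists>\<delta>>0. \<forall>\<delta>'. 0 < \<delta>' \<and> \<delta>' \<le> \<delta> \<longrightarrow> (\<forall>x\<in>S. Q x \<delta>')"
  using assms
proof (induction S rule: finite_induct)
  case empty
  show ?case by (rule exI[of _ 1]) simp
next
  case (insert x F)
  then obtain \<delta>1 where d1: "\<delta>1 > 0" "\<forall>\<delta>'. 0 < \<delta>' \<and> \<delta>' \<le> \<delta>1 \<longrightarrow> (\<forall>x\<in>F. Q x \<delta>')" by auto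
  obtain \<delta>2 where d2: "\<delta>2 > 0" "\<forall>\<delta>'. 0 < \<delta>' \<and> \<delta>' \<le> \<delta>2 \<longrightarrow> Q x \<delta>'" using insert(4) by auto
  show ?case
    by (rule exI[of _ "min \<delta>1 \<delta>2"]) (use d1 d2 in auto)
qed

definition zL :: "nat \<Rightarrow> ('m::finite,'n::finite) zrow \<Rightarrow> real" where
  "zL N r = (\<Sum>k<N. norm (fst r k)) + norm (fst (snd r)) + norm (fst (snd (snd r))) + norm (snd (snd (snd r)))"

lemma zL_nonneg: "zL N r \<ge> 0"
  unfolding zL_def by (intro add_nonneg_nonneg sum_nonneg) auto

lemma inner_dist_bound: "dist v' v < \<delta> \<Longrightarrow> \<bar>x \<bullet> (v' - v)\<bar> \<le> norm x * \<delta>"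
proof -
  assume "dist v' v < \<delta>"
  then have "norm (v' - v) \<le> \<delta>" by (simp add: dist_norm)
  then have "norm x * norm (v' - v) \<le> norm x * \<delta>" by (simp add: mult_left_mono)
  then show ?thesis using Cauchy_Schwarz_ineq2[of x "v' - v"] by linarith
qed

lemma zlin_lip:
  assumes "\<forall>k<N. dist (P' k) (P k) < \<delta>" "dist f0' f0 < \<delta>" "dist w0' w0 < \<delta>" "dist a0' a0 < \<delta>"
  shows "\<bar>zlin N r P' f0' w0' a0' - zlin N r P f0 w0 a0\<bar> \<le> zL N r * \<delta>"
proof -
  have e: "zlin N r P' f0' w0' a0' - zlin N r P f0 w0 a0 =
     (\<Sum>k<N. fst r k \<bullet> (P' k - P k)) + fst (snd r) \<bullet> (f0' - f0) + fst (snd (snd r)) \<bullet> (w0' - w0)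
     + snd (snd (snd r)) \<bullet> (a0' - a0)"
    by (simp add: zlin_alt inner_diff_right sum_subtractf)
  have b1: "\<bar>\<Sum>k<N. fst r k \<bullet> (P' k - P k)\<bar> \<le> (\<Sum>k<N. norm (fst r k)) * \<delta>"
  proof -
    have "\<bar>\<Sum>k<N. fst r k \<bullet> (P' k - P k)\<bar> \<le> (\<Sum>k<N. \<bar>fst r k \<bullet> (P' k - P k)\<bar>)" by (rule sum_abs)
    also have "\<dots> \<le> (\<Sum>k<N. norm (fst r k) * \<delta>)"
      by (intro sum_mono inner_dist_bound) (use assms(1) in auto)
    finally show ?thesis by (simp add: sum_distrib_right)
  qed
  have b2: "\<bar>fst (snd r) \<bullet> (f0' - f0)\<bar> \<le> norm (fst (snd r)) * \<delta>" by (rule inner_dist_bound[OF assms(2)])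
  have b3: "\<bar>fst (snd (snd r)) \<bullet> (w0' - w0)\<bar> \<le> norm (fst (snd (snd r))) * \<delta>" by (rule inner_dist_bound[OF assms(3)])
  have b4: "\<bar>snd (snd (snd r)) \<bullet> (a0' - a0)\<bar> \<le> norm (snd (snd (snd r))) * \<delta>" by (rule inner_dist_bound[OF assms(4)])
  have "zL N r * \<delta> = (\<Sum>k<N. norm (fst r k)) * \<delta> + norm (fst (snd r)) * \<delta> + norm (fst (snd (snd r))) * \<delta> + norm (snd (snd (snd r))) * \<delta>"
    by (simp add: zL_def distrib_right)
  then show ?thesis unfolding e using b1 b2 b3 b4 by linarith
qed

lemma pw_cont:
  fixes g :: "(nat \<Rightarrow> real^'n::finite) \<Rightarrow> real^'m::finite \<Rightarrow> real^'n \<Rightarrow> real^'n \<Rightarrow> real^'n"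
    and ineqs :: "'q \<Rightarrow> (('m,'n) zrow \<times> real) set" and out :: "'q \<Rightarrow> 'n \<Rightarrow> ('m,'n) zrow"
  assumes fin: "finite \<R>" and fini: "\<forall>\<rho>\<in>\<R>. finite (ineqs \<rho>)"
    and cover: "\<forall>P f0 w0 a0. a0 \<in> setA Iu \<longrightarrow> (\<exists>\<rho>\<in>\<R>. \<forall>(r, h)\<in>ineqs \<rho>. zlin N r P f0 w0 a0 \<le> h)"
    and sound: "\<forall>\<rho>\<in>\<R>. \<forall>P f0 w0 a0. a0 \<in> setA Iu \<longrightarrow> (\<forall>(r, h)\<in>ineqs \<rho>. zlin N r P f0 w0 a0 \<le> h) \<longrightarrow>
        g P f0 w0 a0 = (\<chi> q. zlin N (out \<rho> q) P f0 w0 a0 + outc \<rho> q)"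
  shows "z_continuous N Iu g"
  unfolding z_continuous_def
proof (intro allI impI)
  fix P f0 w0 a0 and \<epsilon> :: real
  assume adm: "a0 \<in> setA Iu" and ep: "\<epsilon> > 0"
  define inreg where "inreg \<rho> \<longleftrightarrow> (\<forall>(r, h)\<in>ineqs \<rho>. zlin N r P f0 w0 a0 \<le> h)" for \<rho>
  define SL where "SL \<rho> = (\<Sum>q\<in>UNIV. zL N (out \<rho> q))" for \<rho>
  have SL0: "SL \<rho> \<ge> 0" for \<rho> unfolding SL_def by (intro sum_nonneg zL_nonneg)
  define Q where "Q \<rho> \<delta> \<longleftrightarrow> (inreg \<rho> \<longrightarrow> SL \<rho> * \<delta> < \<epsilon>) \<and>
      (\<not> inreg \<rho> \<longrightarrow> (\<exists>(r, h)\<in>ineqs \<rho>. zL N r * \<delta> < zlin N r P f0 w0 a0 - h))" for \<rho> \<delta>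
  have "\<forall>\<rho>\<in>\<R>. \<exists>\<delta>>0. \<forall>\<delta>'. 0 < \<delta>' \<and> \<delta>' \<le> \<delta> \<longrightarrow> Q \<rho> \<delta>'"
  proof
    fix \<rho> assume "\<rho> \<in> \<R>"
    show "\<exists>\<delta>>0. \<forall>\<delta>'. 0 < \<delta>' \<and> \<delta>' \<le> \<delta> \<longrightarrow> Q \<rho> \<delta>'"
    proof (cases "inreg \<rho>")
      case True
      define \<delta> where "\<delta> = \<epsilon> / (SL \<rho> + 1)"
      have dpos: "\<delta> > 0" using ep SL0[of \<rho>] by (simp add: \<delta>_def)
      have "SL \<rho> * \<delta>' < \<epsilon>" if "0 < \<delta>'" "\<delta>' \<le> \<delta>" for \<delta>'
      proof -
        have "SL \<rho> * \<delta>' \<le> SL \<rho> * \<delta>" using that SL0[of \<rho>] by (simp add: mult_left_mono)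
        also have "\<dots> < (SL \<rho> + 1) * \<delta>" using dpos by simp
        also have "\<dots> = \<epsilon>" using SL0[of \<rho>] by (simp add: \<delta>_def)
        finally show ?thesis .
      qed
      then show ?thesis using dpos True by (auto simp: Q_def)
    next
      case False
      then obtain r h where rh: "(r, h) \<in> ineqs \<rho>" "zlin N r P f0 w0 a0 > h"
        unfolding inreg_def by auto
      define \<delta> where "\<delta> = (zlin N r P f0 w0 a0 - h) / (zL N r + 1)"
      have dpos: "\<delta> > 0" using rh zL_nonneg[of N r] by (simp add: \<delta>_def)
      have "zL N r * \<delta>' < zlin N r P f0 w0 a0 - h" if "0 < \<delta>'" "\<delta>' \<le> \<delta>" for \<delta>'
      proof -
        have "zL N r * \<delta>' \<le> zL N r * \<delta>" using that zL_nonneg[of N r] by (simp add: mult_left_mono)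
        also have "\<dots> < (zL N r + 1) * \<delta>" using dpos by simp
        also have "\<dots> = zlin N r P f0 w0 a0 - h" using zL_nonneg[of N r] by (simp add: \<delta>_def)
        finally show ?thesis .
      qed
      then show ?thesis using dpos False rh(1) unfolding Q_def by blast
    qed
  qed
  from finite_delta[OF fin this] obtain \<delta> where d: "\<delta> > 0" "\<forall>\<rho>\<in>\<R>. Q \<rho> \<delta>" by auto
  show "\<exists>\<delta>>0. \<forall>P' f0' w0' a0'. a0' \<in> setA Iu \<longrightarrow> (\<forall>k<N. dist (P' k) (P k) < \<delta>) \<longrightarrow>
          dist f0' f0 < \<delta> \<longrightarrow> dist w0' w0 < \<delta> \<longrightarrow> dist a0' a0 < \<delta> \<longrightarrow>
          dist (g P' f0' w0' a0') (g P f0 w0 a0) < \<epsilon>"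
  proof (intro exI[of _ \<delta>] conjI allI impI)
    show "\<delta> > 0" by (rule d(1))
    fix P' f0' w0' a0'
    assume adm': "a0' \<in> setA Iu" and cl: "\<forall>k<N. dist (P' k) (P k) < \<delta>" "dist f0' f0 < \<delta>"
      "dist w0' w0 < \<delta>" "dist a0' a0 < \<delta>"
    obtain \<rho> where \<rho>: "\<rho> \<in> \<R>" "\<forall>(r, h)\<in>ineqs \<rho>. zlin N r P' f0' w0' a0' \<le> h"
      using cover adm' by blast
    have lip: "\<bar>zlin N r P' f0' w0' a0' - zlin N r P f0 w0 a0\<bar> \<le> zL N r * \<delta>" for r
      by (rule zlin_lip[OF cl])
    have inr: "inreg \<rho>"
    proof (rule ccontr)
      assume "\<not> inreg \<rho>"
      then obtain r h where rh: "(r, h) \<in> ineqs \<rho>" "zL N r * \<delta> < zlin N r P f0 w0 a0 - h"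
        using d(2) \<rho>(1) unfolding Q_def by blast
      have "zlin N r P' f0' w0' a0' \<le> h" using \<rho>(2) rh(1) by blast
      then show False using lip[of r] rh(2) by linarith
    qed
    have g1: "g P' f0' w0' a0' = (\<chi> q. zlin N (out \<rho> q) P' f0' w0' a0' + outc \<rho> q)"
      using sound \<rho> adm' by blast
    have g2: "g P f0 w0 a0 = (\<chi> q. zlin N (out \<rho> q) P f0 w0 a0 + outc \<rho> q)"
      using sound \<rho>(1) adm inr unfolding inreg_def by blast
    have "dist (g P' f0' w0' a0') (g P f0 w0 a0) = norm (g P' f0' w0' a0' - g P f0 w0 a0)"
      by (simp add: dist_norm)
    also have "\<dots> \<le> (\<Sum>q\<in>UNIV. \<bar>(g P' f0' w0' a0' - g P f0 w0 a0) $ q\<bar>)" by (rule norm_le_l1_cart)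
    also have "\<dots> = (\<Sum>q\<in>UNIV. \<bar>zlin N (out \<rho> q) P' f0' w0' a0' - zlin N (out \<rho> q) P f0 w0 a0\<bar>)"
      unfolding g1 g2 by simp
    also have "\<dots> \<le> (\<Sum>q\<in>UNIV. zL N (out \<rho> q) * \<delta>)" by (intro sum_mono lip)
    also have "\<dots> = SL \<rho> * \<delta>" by (simp add: SL_def sum_distrib_right)
    also have "\<dots> < \<epsilon>" using d(2) \<rho>(1) inr unfolding Q_def by blast
    finally show "dist (g P' f0' w0' a0') (g P f0 w0 a0) < \<epsilon>" .
  qed
qed

lemma assemble:
  fixes g :: "(nat \<Rightarrow> real^'n::finite) \<Rightarrow> real^'m::finite \<Rightarrow> real^'n \<Rightarrow> real^'n \<Rightarrow> real^'n"
    and ineqs :: "'q \<Rightarrow> (('m,'n) zrow \<times> real) set" and out :: "'q \<Rightarrow> 'n \<Rightarrow> ('m,'n) zrow"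
  assumes fin: "finite \<R>" and fini: "\<forall>\<rho>\<in>\<R>. finite (ineqs \<rho>)"
    and cover: "\<forall>P f0 w0 a0. a0 \<in> setA Iu \<longrightarrow> (\<exists>\<rho>\<in>\<R>. \<forall>(r, h)\<in>ineqs \<rho>. zlin N r P f0 w0 a0 \<le> h)"
    and sound: "\<forall>\<rho>\<in>\<R>. \<forall>P f0 w0 a0. a0 \<in> setA Iu \<longrightarrow> (\<forall>(r, h)\<in>ineqs \<rho>. zlin N r P f0 w0 a0 \<le> h) \<longrightarrow>
        g P f0 w0 a0 = (\<chi> q. zlin N (out \<rho> q) P f0 w0 a0 + outc \<rho> q)"
  shows "\<exists>(l::nat) (r::nat \<Rightarrow> nat) (H::nat \<Rightarrow> nat \<Rightarrow> ('m,'n) zrow) (h::nat \<Rightarrow> nat \<Rightarrow> real)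
           (S::nat \<Rightarrow> 'n \<Rightarrow> ('m,'n) zrow) (sv::nat \<Rightarrow> real^'n).
          (\<forall>P f0 w0 a0. a0 \<in> setA Iu \<longrightarrow>
             (\<exists>i\<in>{1..l}. \<forall>j<r i. zlin N (H i j) P f0 w0 a0 \<le> h i j)) \<and>
          (\<forall>i\<in>{1..l}. \<forall>P f0 w0 a0. a0 \<in> setA Iu \<longrightarrow>
             (\<forall>j<r i. zlin N (H i j) P f0 w0 a0 \<le> h i j) \<longrightarrow>
             g P f0 w0 a0 = (\<chi> q. zlin N (S i q) P f0 w0 a0 + sv i $ q))"
proof -
  obtain rs where rs: "set rs = \<R>" using finite_list[OF fin] by blast
  define L where "L \<rho> = (SOME xs. set xs = ineqs \<rho>)" for \<rho>
  have L: "set (L \<rho>) = ineqs \<rho>" if "\<rho> \<in> \<R>" for \<rho>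
    unfolding L_def using finite_list[of "ineqs \<rho>"] fini that by (metis (mono_tags, lifting) someI_ex)
  define RR where "RR i = rs ! (i - 1)" for i
  have RRin: "RR i \<in> \<R>" if "i \<in> {1..length rs}" for i
    using that rs by (auto simp: RR_def)
  have reg_iff: "(\<forall>j<length (L (RR i)). zlin N (fst (L (RR i) ! j)) P f0 w0 a0 \<le> snd (L (RR i) ! j)) \<longleftrightarrow>
      (\<forall>(r, h)\<in>ineqs (RR i). zlin N r P f0 w0 a0 \<le> h)" if "i \<in> {1..length rs}" for i P f0 w0 a0
  proof -
    have "(\<forall>j<length (L (RR i)). zlin N (fst (L (RR i) ! j)) P f0 w0 a0 \<le> snd (L (RR i) ! j)) \<longleftrightarrow>
          (\<forall>x\<in>set (L (RR i)). zlin N (fst x) P f0 w0 a0 \<le> snd x)"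
      by (metis in_set_conv_nth)
    then show ?thesis using L[OF RRin[OF that]] by auto
  qed
  show ?thesis
  proof (intro exI conjI)
    show "\<forall>P f0 w0 a0. a0 \<in> setA Iu \<longrightarrow> (\<exists>i\<in>{1..length rs}. \<forall>j<length (L (RR i)).
            zlin N (fst (L (RR i) ! j)) P f0 w0 a0 \<le> snd (L (RR i) ! j))"
    proof (intro allI impI)
      fix P f0 w0 a0 assume "a0 \<in> setA Iu"
      then obtain \<rho> where \<rho>: "\<rho> \<in> \<R>" "\<forall>(r, h)\<in>ineqs \<rho>. zlin N r P f0 w0 a0 \<le> h" using cover by blast
      obtain m where m: "m < length rs" "rs ! m = \<rho>" using \<rho>(1) rs by (metis in_set_conv_nth)
      have i: "Suc m \<in> {1..length rs}" using m by auto
      have "RR (Suc m) = \<rho>" using m by (simp add: RR_def)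
      then show "\<exists>i\<in>{1..length rs}. \<forall>j<length (L (RR i)). zlin N (fst (L (RR i) ! j)) P f0 w0 a0 \<le> snd (L (RR i) ! j)"
        using reg_iff[OF i] \<rho>(2) i by metis
    qed
    show "\<forall>i\<in>{1..length rs}. \<forall>P f0 w0 a0. a0 \<in> setA Iu \<longrightarrow>
             (\<forall>j<length (L (RR i)). zlin N (fst (L (RR i) ! j)) P f0 w0 a0 \<le> snd (L (RR i) ! j)) \<longrightarrow>
             g P f0 w0 a0 = (\<chi> q. zlin N (out (RR i) q) P f0 w0 a0 + (\<chi> q. outc (RR i) q) $ q)"
    proof (intro ballI allI impI)
      fix i P f0 w0 a0 assume i: "i \<in> {1..length rs}" and adm: "a0 \<in> setA Iu"
        and h: "\<forall>j<length (L (RR i)). zlin N (fst (L (RR i) ! j)) P f0 w0 a0 \<le> snd (L (RR i) ! j)"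
      have "\<forall>(r, h)\<in>ineqs (RR i). zlin N r P f0 w0 a0 \<le> h" using reg_iff[OF i] h by blast
      then have "g P f0 w0 a0 = (\<chi> q. zlin N (out (RR i) q) P f0 w0 a0 + outc (RR i) q)"
        using sound RRin[OF i] adm by blast
      then show "g P f0 w0 a0 = (\<chi> q. zlin N (out (RR i) q) P f0 w0 a0 + (\<chi> q. outc (RR i) q) $ q)"
        by simp
    qed
  qed
qed

lemma fst_sum': "fst (\<Sum>x\<in>S. f x) = (\<Sum>x\<in>S. fst (f x))"
  by (induction S rule: infinite_finite_induct) auto

lemma ball_img: "(\<forall>x\<in>f ` A. P x) \<longleftrightarrow> (\<forall>a\<in>A. P (f a))"
  by auto

lemma regOK_cong:
  assumes "J \<subseteq> R" "\<forall>j\<in>R. b j = b' j"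
  shows "regOK a R J Y \<Lambda> b \<longleftrightarrow> regOK a R J Y \<Lambda> b'"
proof -
  have "ysol J Y b = ysol J Y b'" unfolding ysol_def using assms by (intro sum.cong) auto
  moreover have "(\<Sum>j'\<in>J. b j' * \<Lambda> j j') = (\<Sum>j'\<in>J. b' j' * \<Lambda> j j')" for j
    using assms by (intro sum.cong) auto
  ultimately show ?thesis unfolding regOK_def using assms by auto
qed

context setting
begin

definition bs :: "'n set \<Rightarrow> (nat \<Rightarrow> real^'n) \<Rightarrow> real^'m \<Rightarrow> real^'n \<Rightarrow> real^'n \<Rightarrow> 'n row \<Rightarrow> real" where
  "bs Sg P f0 w0 a0 j = zlin N (brow Sg j) P f0 w0 a0 + bc j"

definition regineqs :: "'n set \<Rightarrow> 'n row set \<Rightarrow> ('n row \<Rightarrow> (real^'n) \<times> real) \<Rightarrow> ('n row \<Rightarrow> 'n row \<Rightarrow> real)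
    \<Rightarrow> (('m,'n) zrow \<times> real) set" where
  "regineqs Sg J Y \<Lambda> =
     (\<lambda>i. (zsc (if i \<in> Sg then -1 else 1) (zA i), 0)) ` Iu
   \<union> (\<lambda>i. (zadd (zcomb J (\<lambda>j. avec i \<bullet> Y j) (brow Sg)) (zsc (-1) (brow Sg i)),
           bc i - (\<Sum>j\<in>J. (avec i \<bullet> Y j) * bc j))) ` Rows
   \<union> (\<lambda>j. (zsc (-1) (zcomb J (\<lambda>j'. \<Lambda> j j') (brow Sg)), (\<Sum>j'\<in>J. \<Lambda> j j' * bc j'))) ` J"

definition coef :: "('n row \<Rightarrow> (real^'n) \<times> real) \<Rightarrow> 'n \<Rightarrow> 'n row \<Rightarrow> real" where
  "coef Y q j = (if q \<in> Iu then fst (Y j) $ q / sqrt (c q) else 0)"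

lemma finite_regineqs: "finite J \<Longrightarrow> finite (regineqs Sg J Y \<Lambda>)"
  unfolding regineqs_def using finite_Rows by simp

lemma in_region_iff:
  "(\<forall>(r, h)\<in>regineqs Sg J Y \<Lambda>. zlin N r P f0 w0 a0 \<le> h) \<longleftrightarrow>
     sgnok Sg a0 \<and> regOK avec Rows J Y \<Lambda> (bs Sg P f0 w0 a0)"
proof -
  let ?z = "\<lambda>r. zlin N r P f0 w0 a0"
  have s: "(\<forall>i\<in>Iu. ?z (zsc (if i \<in> Sg then -1 else 1) (zA i)) \<le> 0) \<longleftrightarrow> sgnok Sg a0"
    by (auto simp: sgnok_def zlin_zsc zlin_zA)
  have f: "?z (zadd (zcomb J (\<lambda>j. avec i \<bullet> Y j) (brow Sg)) (zsc (-1) (brow Sg i)))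
           \<le> bc i - (\<Sum>j\<in>J. (avec i \<bullet> Y j) * bc j) \<longleftrightarrow>
         avec i \<bullet> ysol J Y (bs Sg P f0 w0 a0) \<le> bs Sg P f0 w0 a0 i" for i
  proof -
    have "avec i \<bullet> ysol J Y (bs Sg P f0 w0 a0) = (\<Sum>j\<in>J. (avec i \<bullet> Y j) * ?z (brow Sg j)) + (\<Sum>j\<in>J. (avec i \<bullet> Y j) * bc j)"
      by (simp add: ysol_def inner_sum_right bs_def algebra_simps sum.distrib)
    then show ?thesis by (simp add: zlin_zadd zlin_zsc zlin_zcomb bs_def) linarith
  qed
  have m: "?z (zsc (-1) (zcomb J (\<lambda>j'. \<Lambda> j j') (brow Sg))) \<le> (\<Sum>j'\<in>J. \<Lambda> j j' * bc j') \<longleftrightarrow>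
         0 \<le> (\<Sum>j'\<in>J. bs Sg P f0 w0 a0 j' * \<Lambda> j j')" for j
  proof -
    have "(\<Sum>j'\<in>J. bs Sg P f0 w0 a0 j' * \<Lambda> j j') = (\<Sum>j'\<in>J. \<Lambda> j j' * ?z (brow Sg j')) + (\<Sum>j'\<in>J. \<Lambda> j j' * bc j')"
      by (simp add: bs_def algebra_simps sum.distrib)
    then show ?thesis by (simp add: zlin_zsc zlin_zcomb) linarith
  qed
  show ?thesis
    unfolding regineqs_def ball_Un ball_img prod.case regOK_def s f m by blast
qed

lemma regions:
  "\<exists>\<R> :: ('n set \<times> 'n row set \<times> ('n row \<Rightarrow> (real^'n) \<times> real) \<times> ('n row \<Rightarrow> 'n row \<Rightarrow> real)) set.
    finite \<R> \<and> (\<forall>\<rho>\<in>\<R>. finite (regineqs (fst \<rho>) (fst (snd \<rho>)) (fst (snd (snd \<rho>))) (snd (snd (snd \<rho>))))) \<and>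
    (\<forall>P f0 w0 a0. a0 \<in> setA Iu \<longrightarrow> (\<exists>\<rho>\<in>\<R>. \<forall>(r, h)\<in>regineqs (fst \<rho>) (fst (snd \<rho>)) (fst (snd (snd \<rho>))) (snd (snd (snd \<rho>))).
        zlin N r P f0 w0 a0 \<le> h)) \<and>
    (\<forall>\<rho>\<in>\<R>. \<forall>P f0 w0 a0. a0 \<in> setA Iu \<longrightarrow>
        (\<forall>(r, h)\<in>regineqs (fst \<rho>) (fst (snd \<rho>)) (fst (snd (snd \<rho>))) (snd (snd (snd \<rho>))). zlin N r P f0 w0 a0 \<le> h) \<longrightarrow>
        u_opt T N Yb D M E Ti Iu Iw wlo whi eps c d P f0 w0 a0 =
          (\<chi> q. zlin N (zcomb (fst (snd \<rho>)) (coef (fst (snd (snd \<rho>))) q) (brow (fst \<rho>))) P f0 w0 a0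
                + (\<Sum>j\<in>fst (snd \<rho>). coef (fst (snd (snd \<rho>))) q j * bc j)))"
proof -
  obtain \<J> where J: "finite \<J>" "\<forall>(J, Y, \<Lambda>)\<in>\<J>. goodJ avec Rows J Y \<Lambda>"
    "\<forall>b. Kset avec Rows b \<noteq> {} \<longrightarrow> (\<exists>(J, Y, \<Lambda>)\<in>\<J>. regOK avec Rows J Y \<Lambda> b)"
    using abstract_regions[OF finite_Rows, of avec] by blast
  define \<R> where "\<R> = Pow Iu \<times> \<J>"
  have goodR: "goodJ avec Rows (fst (snd \<rho>)) (fst (snd (snd \<rho>))) (snd (snd (snd \<rho>)))" if "\<rho> \<in> \<R>" for \<rho>
    using that J(2) unfolding \<R>_def by auto
  have finJ: "finite (fst (snd \<rho>))" if "\<rho> \<in> \<R>" for \<rho>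
    using goodR[OF that] finite_Rows by (auto simp: goodJ_def intro: finite_subset)
  show ?thesis
  proof (intro exI[of _ \<R>] conjI ballI allI impI)
    show "finite \<R>" unfolding \<R>_def using J(1) by simp
  next
    fix \<rho> assume "\<rho> \<in> \<R>"
    then show "finite (regineqs (fst \<rho>) (fst (snd \<rho>)) (fst (snd (snd \<rho>))) (snd (snd (snd \<rho>))))"
      using finJ finite_regineqs by blast
  next
    fix P f0 w0 a0 assume adm: "a0 \<in> setA Iu"
    define Sg where "Sg = {i\<in>Iu. a0 $ i \<ge> 0}"
    have sg: "sgnok Sg a0" by (auto simp: Sg_def sgnok_def)
    obtain J Y \<Lambda> where JYL: "(J, Y, \<Lambda>) \<in> \<J>" "regOK avec Rows J Y \<Lambda> (breal P f0 w0 a0)"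
      using J(3) K_ne[OF adm] by blast
    have JR: "J \<subseteq> Rows" using J(2) JYL(1) by (auto simp: goodJ_def)
    have beq: "\<forall>j\<in>Rows. bs Sg P f0 w0 a0 j = breal P f0 w0 a0 j" using b_eq[OF sg] by (simp add: bs_def)
    have "regOK avec Rows J Y \<Lambda> (bs Sg P f0 w0 a0)"
      by (rule regOK_cong[OF JR beq, THEN iffD2, OF JYL(2)])
    then have "\<forall>(r, h)\<in>regineqs Sg J Y \<Lambda>. zlin N r P f0 w0 a0 \<le> h" using in_region_iff sg by blast
    moreover have "(Sg, J, Y, \<Lambda>) \<in> \<R>" unfolding \<R>_def using JYL(1) by (auto simp: Sg_def)
    ultimately show "\<exists>\<rho>\<in>\<R>. \<forall>(r, h)\<in>regineqs (fst \<rho>) (fst (snd \<rho>)) (fst (snd (snd \<rho>))) (snd (snd (snd \<rho>))).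
        zlin N r P f0 w0 a0 \<le> h" by force
  next
    fix \<rho> P f0 w0 a0
    assume \<rho>: "\<rho> \<in> \<R>" and adm: "a0 \<in> setA Iu"
      and inr: "\<forall>(r, h)\<in>regineqs (fst \<rho>) (fst (snd \<rho>)) (fst (snd (snd \<rho>))) (snd (snd (snd \<rho>))). zlin N r P f0 w0 a0 \<le> h"
    obtain Sg J Y \<Lambda> where rho: "\<rho> = (Sg, J, Y, \<Lambda>)" by (cases \<rho>) auto
    have g: "goodJ avec Rows J Y \<Lambda>" using goodR[OF \<rho>] rho by simp
    have JR: "J \<subseteq> Rows" and fJ: "finite J" using g finite_Rows by (auto simp: goodJ_def intro: finite_subset)
    have sg: "sgnok Sg a0" and ok: "regOK avec Rows J Y \<Lambda> (bs Sg P f0 w0 a0)"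
      using inr in_region_iff unfolding rho by auto
    have beq: "\<forall>j\<in>Rows. bs Sg P f0 w0 a0 j = breal P f0 w0 a0 j" using b_eq[OF sg] by (simp add: bs_def)
    have ok': "regOK avec Rows J Y \<Lambda> (breal P f0 w0 a0)" by (rule regOK_cong[OF JR beq, THEN iffD1, OF ok])
    have ys: "ysol J Y (breal P f0 w0 a0) = ysol J Y (bs Sg P f0 w0 a0)"
      unfolding ysol_def using beq JR by (intro sum.cong) auto
    have u: "u_opt T N Yb D M E Ti Iu Iw wlo whi eps c d P f0 w0 a0 = fst (dec (ysol J Y (bs Sg P f0 w0 a0)))"
      using uopt_char[OF adm region_sound[OF finite_Rows g ok']] ys by simp
    have comp: "fst (dec (ysol J Y (bs Sg P f0 w0 a0))) $ q =
        zlin N (zcomb J (coef Y q) (brow Sg)) P f0 w0 a0 + (\<Sum>j\<in>J. coef Y q j * bc j)" for q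
    proof -
      have "fst (dec (ysol J Y (bs Sg P f0 w0 a0))) $ q = (\<Sum>j\<in>J. coef Y q j * bs Sg P f0 w0 a0 j)"
        by (simp add: dec_def ysol_def coef_def fst_sum' sum_divide_distrib mult.commute)
      also have "\<dots> = zlin N (zcomb J (coef Y q) (brow Sg)) P f0 w0 a0 + (\<Sum>j\<in>J. coef Y q j * bc j)"
        by (simp add: zlin_zcomb bs_def distrib_left sum.distrib)
      finally show ?thesis .
    qed
    show "u_opt T N Yb D M E Ti Iu Iw wlo whi eps c d P f0 w0 a0 =
          (\<chi> q. zlin N (zcomb (fst (snd \<rho>)) (coef (fst (snd (snd \<rho>))) q) (brow (fst \<rho>))) P f0 w0 a0
                + (\<Sum>j\<in>fst (snd \<rho>). coef (fst (snd (snd \<rho>))) q j * bc j))"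
      unfolding u rho by (simp add: vec_eq_iff comp)
  qed
qed

theorem main_loc:
  "(\<forall>P f0 w0 a0. a0 \<in> setA Iu \<longrightarrow> (\<exists>!s. Ropt P f0 w0 a0 s))
   \<and> z_continuous N Iu (u_opt T N Yb D M E Ti Iu Iw wlo whi eps c d)
   \<and> (\<exists>(l::nat) (r::nat \<Rightarrow> nat) (H::nat \<Rightarrow> nat \<Rightarrow> ('m,'n) zrow) (h::nat \<Rightarrow> nat \<Rightarrow> real)
         (S::nat \<Rightarrow> 'n \<Rightarrow> ('m,'n) zrow) (sv::nat \<Rightarrow> real^'n).
        (\<forall>P f0 w0 a0. a0 \<in> setA Iu \<longrightarrow>
           (\<exists>i\<in>{1..l}. \<forall>j<r i. zlin N (H i j) P f0 w0 a0 \<le> h i j)) \<and>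
        (\<forall>i\<in>{1..l}. \<forall>P f0 w0 a0. a0 \<in> setA Iu \<longrightarrow>
           (\<forall>j<r i. zlin N (H i j) P f0 w0 a0 \<le> h i j) \<longrightarrow>
           u_opt T N Yb D M E Ti Iu Iw wlo whi eps c d P f0 w0 a0
             = (\<chi> q. zlin N (S i q) P f0 w0 a0 + sv i $ q)))"
proof -
  obtain \<R> :: "('n set \<times> 'n row set \<times> ('n row \<Rightarrow> (real^'n) \<times> real) \<times> ('n row \<Rightarrow> 'n row \<Rightarrow> real)) set"
    where R: "finite \<R>" "\<forall>\<rho>\<in>\<R>. finite (regineqs (fst \<rho>) (fst (snd \<rho>)) (fst (snd (snd \<rho>))) (snd (snd (snd \<rho>))))"
    "\<forall>P f0 w0 a0. a0 \<in> setA Iu \<longrightarrow> (\<exists>\<rho>\<in>\<R>. \<forall>(r, h)\<in>regineqs (fst \<rho>) (fst (snd \<rho>)) (fst (snd (snd \<rho>))) (snd (snd (snd \<rho>))).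
        zlin N r P f0 w0 a0 \<le> h)"
    "\<forall>\<rho>\<in>\<R>. \<forall>P f0 w0 a0. a0 \<in> setA Iu \<longrightarrow>
        (\<forall>(r, h)\<in>regineqs (fst \<rho>) (fst (snd \<rho>)) (fst (snd (snd \<rho>))) (snd (snd (snd \<rho>))). zlin N r P f0 w0 a0 \<le> h) \<longrightarrow>
        u_opt T N Yb D M E Ti Iu Iw wlo whi eps c d P f0 w0 a0 =
          (\<chi> q. zlin N (zcomb (fst (snd \<rho>)) (coef (fst (snd (snd \<rho>))) q) (brow (fst \<rho>))) P f0 w0 a0
                + (\<Sum>j\<in>fst (snd \<rho>). coef (fst (snd (snd \<rho>))) q j * bc j))"
    using regions by blast
  have 1: "\<forall>P f0 w0 a0. a0 \<in> setA Iu \<longrightarrow> (\<exists>!s. Ropt P f0 w0 a0 s)" using ex1_opt by blast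
  have 2: "z_continuous N Iu (u_opt T N Yb D M E Ti Iu Iw wlo whi eps c d)"
    by (rule pw_cont[OF R(1) R(2) R(3) R(4)])
  have 3: "\<exists>(l::nat) (r::nat \<Rightarrow> nat) (H::nat \<Rightarrow> nat \<Rightarrow> ('m,'n) zrow) (h::nat \<Rightarrow> nat \<Rightarrow> real)
         (S::nat \<Rightarrow> 'n \<Rightarrow> ('m,'n) zrow) (sv::nat \<Rightarrow> real^'n).
        (\<forall>P f0 w0 a0. a0 \<in> setA Iu \<longrightarrow>
           (\<exists>i\<in>{1..l}. \<forall>j<r i. zlin N (H i j) P f0 w0 a0 \<le> h i j)) \<and>
        (\<forall>i\<in>{1..l}. \<forall>P f0 w0 a0. a0 \<in> setA Iu \<longrightarrow>
           (\<forall>j<r i. zlin N (H i j) P f0 w0 a0 \<le> h i j) \<longrightarrow>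
           u_opt T N Yb D M E Ti Iu Iw wlo whi eps c d P f0 w0 a0
             = (\<chi> q. zlin N (S i q) P f0 w0 a0 + sv i $ q))"
    by (rule assemble[OF R(1) R(2) R(3) R(4)])
  show ?thesis using 1 2 3 by blast
qed

end


theorem lemma4p1:
  fixes pos neg :: "'m::finite \<Rightarrow> 'n::finite"
    and M E :: "real^'n^'n" and Yb :: "real^'m^'m"
    and Iu Iw :: "'n set"
    and T tt d :: real and N :: nat
    and c eps Ti wlo whi :: "'n \<Rightarrow> real"
  assumes graph: "connected_simple_graph pos neg"
    and M: "is_pos_diag M" and E: "is_pos_diag E" and Yb: "is_pos_diag Yb"
    and Iw_Iu: "Iw \<subseteq> Iu"
    and T: "T > 0" and tt: "tt > 0" and N: "N = nat \<lceil>tt / T\<rceil>"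
    and c: "\<forall>i\<in>Iu. c i > 0" and eps: "\<forall>i\<in>Iu. eps i > 0" and Ti: "\<forall>i\<in>Iu. Ti i > 0"
    and d: "d > 0"
    and wb: "\<forall>i\<in>Iw. wlo i < whi i"
  shows
    "(\<forall>P f0 w0 a0. a0 \<in> setA Iu \<longrightarrow>
        (\<exists>!s. R_optimal T N Yb (incidence pos neg) M E Ti Iu Iw wlo whi eps c d P f0 w0 a0 s))
     \<and> z_continuous N Iu (u_opt T N Yb (incidence pos neg) M E Ti Iu Iw wlo whi eps c d)
     \<and> (\<exists>(l::nat) (r::nat \<Rightarrow> nat) (H::nat \<Rightarrow> nat \<Rightarrow> ('m,'n) zrow) (h::nat \<Rightarrow> nat \<Rightarrow> real)
           (S::nat \<Rightarrow> 'n \<Rightarrow> ('m,'n) zrow) (sv::nat \<Rightarrow> real^'n).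
          (\<forall>P f0 w0 a0. a0 \<in> setA Iu \<longrightarrow>
             (\<exists>i\<in>{1..l}. \<forall>j<r i. zlin N (H i j) P f0 w0 a0 \<le> h i j)) \<and>
          (\<forall>i\<in>{1..l}. \<forall>P f0 w0 a0. a0 \<in> setA Iu \<longrightarrow>
             (\<forall>j<r i. zlin N (H i j) P f0 w0 a0 \<le> h i j) \<longrightarrow>
             u_opt T N Yb (incidence pos neg) M E Ti Iu Iw wlo whi eps c d P f0 w0 a0
               = (\<chi> q. zlin N (S i q) P f0 w0 a0 + sv i $ q)))"
  proof -
  interpret setting T N Yb "incidence pos neg" M E Ti Iu Iw wlo whi eps c d
    using M c eps d by unfold_locales auto
  show ?thesis by (rule main_loc)
qed

end
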